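(* For every integer $n\ge 4$ and every prime power $q$, $$f(n,q)\ge (q^{n+1}-1)(q^n-1)\cdot\frac{q^4+2q^2+q+1}{(q^5-1)(q^4-1)}.$$ In particular, for every $n\ge 5$ and every prime power $q$, $f(n,q)\ge q^{2n-4}+2q^{2n-6}+q^{2n-7}+2q^{2n-8}$.
   Context: $\mathrm{PG}(n,q)$ denotes the $n$-dimensional projective space over $\mathbb F_q$. A $(2,1)$-blocking set in $\mathrm{PG}(n,q)$ is a set $\mathcal B$ of lines such that every plane of $\mathrm{PG}(n,q)$ contains at least one line of $\mathcal B$. For $n\ge -1$, $f(n,q)$ denotes the smallest possible size of a $(2,1)$-blocking set in $\mathrm{PG}(n,q)$. *)

theory Defs
  imports Complex_Main
begin

text \<open>The ambient vector space V(n+1,F) underlying PG(n,F) is modelled as the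
functions nat \<Rightarrow> F vanishing outside the coordinates 0..n.\<close>

definition lin_comb :: "(nat \<Rightarrow> nat \<Rightarrow> 'a::field) \<Rightarrow> nat \<Rightarrow> (nat \<Rightarrow> 'a) \<Rightarrow> (nat \<Rightarrow> 'a)" where
  "lin_comb v k c = (\<lambda>j. \<Sum>i<k. c i * v i j)"

text \<open>The (k-1)-dimensional projective subspaces of PG(n,F), i.e. the k-dimensional
vector subspaces of F^(n+1), each given as the span of k linearly independent vectors.\<close>

definition proj_subspaces :: "'a::field itself \<Rightarrow> nat \<Rightarrow> nat \<Rightarrow> (nat \<Rightarrow> 'a) set set" where
  "proj_subspaces _ n k =
     {S. \<exists>v :: nat \<Rightarrow> nat \<Rightarrow> 'a.
          (\<forall>i<k. \<forall>j. n < j \<longrightarrow> v i j = 0) \<and>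
          (\<forall>c. lin_comb v k c = (\<lambda>_. 0) \<longrightarrow> (\<forall>i<k. c i = 0)) \<and>
          S = range (lin_comb v k)}"

abbreviation PG_lines :: "'a::field itself \<Rightarrow> nat \<Rightarrow> (nat \<Rightarrow> 'a) set set" where
  "PG_lines F n \<equiv> proj_subspaces F n 2"

abbreviation PG_planes :: "'a::field itself \<Rightarrow> nat \<Rightarrow> (nat \<Rightarrow> 'a) set set" where
  "PG_planes F n \<equiv> proj_subspaces F n 3"

definition blocking_21 :: "'a::field itself \<Rightarrow> nat \<Rightarrow> (nat \<Rightarrow> 'a) set set \<Rightarrow> bool" where
  "blocking_21 F n B \<longleftrightarrow> B \<subseteq> PG_lines F n \<and> (\<forall>P \<in> PG_planes F n. \<exists>L\<in>B. L \<subseteq> P)"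

definition f_21 :: "'a::field itself \<Rightarrow> nat \<Rightarrow> nat" where
  "f_21 F n = Inf {card B | B. blocking_21 F n B}"

end

theory Submission
  imports Defs "HOL-Library.Function_Algebras" "HOL-Library.FuncSet"
begin

definition smul :: "'a::field \<Rightarrow> (nat \<Rightarrow> 'a) \<Rightarrow> (nat \<Rightarrow> 'a)" where
  "smul c x = (\<lambda>j. c * x j)"

definition subsp :: "(nat \<Rightarrow> 'a::field) set \<Rightarrow> bool" where
  "subsp X \<longleftrightarrow> 0 \<in> X \<and> (\<forall>x\<in>X. \<forall>y\<in>X. x + y \<in> X) \<and> (\<forall>c. \<forall>x\<in>X. smul c x \<in> X)"

definition dsub :: "(nat \<Rightarrow> 'a::{finite,field}) set \<Rightarrow> nat \<Rightarrow> bool" where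
  "dsub X k \<longleftrightarrow> subsp X \<and> finite X \<and> card X = card (UNIV::'a set) ^ k"

definition betw :: "(nat \<Rightarrow> 'a::{finite,field}) set \<Rightarrow> (nat \<Rightarrow> 'a) set \<Rightarrow> nat \<Rightarrow> (nat \<Rightarrow> 'a) set set" where
  "betw U A k = {X. dsub X k \<and> U \<subseteq> X \<and> X \<subseteq> A}"

definition msum :: "(nat \<Rightarrow> 'a::field) set \<Rightarrow> (nat \<Rightarrow> 'a) set \<Rightarrow> (nat \<Rightarrow> 'a) set" where
  "msum X Y = (\<lambda>p. fst p + snd p) ` (X \<times> Y)"

definition vext :: "(nat \<Rightarrow> 'a::field) set \<Rightarrow> (nat \<Rightarrow> 'a) \<Rightarrow> (nat \<Rightarrow> 'a) set" where
  "vext X w = (\<lambda>p. fst p + smul (snd p) w) ` (X \<times> UNIV)"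

lemma smul_apply [simp]: "smul c x j = c * x j" by (simp add: smul_def)

lemma subspD:
  assumes "subsp X"
  shows "0 \<in> X" "x \<in> X \<Longrightarrow> y \<in> X \<Longrightarrow> x + y \<in> X" "x \<in> X \<Longrightarrow> smul c x \<in> X"
  using assms by (auto simp: subsp_def)

lemma subsp_uminus: assumes "subsp X" "x \<in> X" shows "- x \<in> X"
proof -
  have "- x = smul (-1) x" by (simp add: fun_eq_iff)
  thus ?thesis using subspD(3)[OF assms(1,2)] by simp
qed

lemma subsp_diff: assumes "subsp X" "x \<in> X" "y \<in> X" shows "x - y \<in> X"
  using subspD(2)[OF assms(1,2) subsp_uminus[OF assms(1,3)]] by simp

lemma subsp_Int: "subsp X \<Longrightarrow> subsp Y \<Longrightarrow> subsp (X \<inter> Y)"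
  by (auto simp: subsp_def)

lemma msum_iff: "z \<in> msum X Y \<longleftrightarrow> (\<exists>x\<in>X. \<exists>y\<in>Y. z = x + y)"
  unfolding msum_def image_iff by auto

lemma msumI: "x \<in> X \<Longrightarrow> y \<in> Y \<Longrightarrow> x + y \<in> msum X Y"
  unfolding msum_iff by blast

lemma subsp_msum: assumes "subsp X" "subsp Y" shows "subsp (msum X Y)"
  unfolding subsp_def
proof (intro conjI ballI allI)
  have "(0::nat\<Rightarrow>'a) + 0 \<in> msum X Y" by (rule msumI) (use assms subspD(1) in auto)
  thus "0 \<in> msum X Y" by simp
next
  fix a b assume "a \<in> msum X Y" "b \<in> msum X Y"
  then obtain x y x' y' where h: "x\<in>X" "y\<in>Y" "a = x + y" "x'\<in>X" "y'\<in>Y" "b = x' + y'"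
    unfolding msum_iff by blast
  have "a + b = (x + x') + (y + y')" using h by (simp add: algebra_simps)
  moreover have "(x + x') + (y + y') \<in> msum X Y"
    by (rule msumI) (use assms h subspD(2) in blast)+
  ultimately show "a + b \<in> msum X Y" by simp
next
  fix a c assume "a \<in> msum X Y"
  then obtain x y where h: "x\<in>X" "y\<in>Y" "a = x + y" unfolding msum_iff by blast
  have "smul c a = smul c x + smul c y" using h by (simp add: fun_eq_iff algebra_simps)
  moreover have "smul c x + smul c y \<in> msum X Y"
    by (rule msumI) (use assms h subspD(3) in blast)+
  ultimately show "smul c a \<in> msum X Y" by simp
qed

lemma msum_sub1: "subsp Y \<Longrightarrow> X \<subseteq> msum X Y"
  using msumI[of _ X 0 Y] subspD(1)[of Y] by fastforce

lemma msum_sub2: "subsp X \<Longrightarrow> Y \<subseteq> msum X Y"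
  using msumI[of 0 X _ Y] subspD(1)[of X] by fastforce

lemma msum_le: "subsp A \<Longrightarrow> X \<subseteq> A \<Longrightarrow> Y \<subseteq> A \<Longrightarrow> msum X Y \<subseteq> A"
  unfolding subset_iff msum_iff using subspD(2)[of A] by blast

lemma finite_msum: "finite X \<Longrightarrow> finite Y \<Longrightarrow> finite (msum X Y)"
  by (simp add: msum_def)

lemma msum_comm: "msum X Y = msum Y X"
  unfolding msum_iff set_eq_iff by (metis add.commute)

lemma card_msum:
  assumes "subsp X" "subsp Y" "finite X" "finite Y"
  shows "card (msum X Y) * card (X \<inter> Y) = card X * card Y"
proof -
  let ?f = "\<lambda>p::(nat\<Rightarrow>'a) \<times> (nat\<Rightarrow>'a). fst p + snd p"
  have fin: "finite (X \<times> Y)" using assms by simp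
  have "card (X \<times> Y) = (\<Sum>z\<in>?f ` (X \<times> Y). card {p\<in>X \<times> Y. ?f p = z})"
    using card_eq_sum[of "X \<times> Y"] sum.image_gen[OF fin, of "\<lambda>_. 1::nat" ?f] by simp
  also have "\<dots> = (\<Sum>z\<in>msum X Y. card (X \<inter> Y))"
  proof (rule sum.cong)
    show "?f ` (X \<times> Y) = msum X Y" by (simp add: msum_def)
  next
    fix z assume "z \<in> msum X Y"
    then obtain x0 y0 where h: "x0\<in>X" "y0\<in>Y" "z = x0 + y0" by (auto simp: msum_iff)
    have "bij_betw (\<lambda>d. (x0 + d, y0 - d)) (X \<inter> Y) {p\<in>X \<times> Y. ?f p = z}"
    proof (rule bij_betwI[where g = "\<lambda>p. fst p - x0"])
      show "(\<lambda>d. (x0 + d, y0 - d)) \<in> X \<inter> Y \<rightarrow> {p \<in> X \<times> Y. fst p + snd p = z}"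
        using h assms by (auto intro: subspD subsp_diff)
      show "(\<lambda>p. fst p - x0) \<in> {p \<in> X \<times> Y. fst p + snd p = z} \<rightarrow> X \<inter> Y"
      proof
        fix p assume p: "p \<in> {p \<in> X \<times> Y. fst p + snd p = z}"
        have "fst p - x0 \<in> X" using p h assms by (auto intro: subsp_diff)
        moreover have "fst p - x0 = y0 - snd p" using p h by (auto simp: algebra_simps)
        moreover have "y0 - snd p \<in> Y" using p h assms by (auto intro: subsp_diff)
        ultimately show "fst p - x0 \<in> X \<inter> Y" by simp
      qed
      show "\<And>x. x \<in> X \<inter> Y \<Longrightarrow> fst (x0 + x, y0 - x) - x0 = x" by simp
      show "\<And>y. y \<in> {p \<in> X \<times> Y. fst p + snd p = z} \<Longrightarrow> (x0 + (fst y - x0), y0 - (fst y - x0)) = y"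
        using h by (auto simp: algebra_simps prod_eq_iff)
    qed
    thus "card {p\<in>X \<times> Y. ?f p = z} = card (X \<inter> Y)" by (simp add: bij_betw_same_card)
  qed
  also have "\<dots> = card (msum X Y) * card (X \<inter> Y)" by simp
  finally show ?thesis by (simp add: card_cartesian_product)
qed


abbreviation qF :: "'a::{finite,field} itself \<Rightarrow> nat" where
  "qF _ \<equiv> card (UNIV::'a set)"

lemma card_ge2: "card (UNIV::'a::{finite,field} set) \<ge> 2"
proof -
  have "card {0::'a, 1} = 2" by simp
  moreover have "card {0::'a, 1} \<le> card (UNIV::'a set)" by (rule card_mono) auto
  ultimately show ?thesis by simp
qed

lemma vext_iff: "z \<in> vext X w \<longleftrightarrow> (\<exists>x\<in>X. \<exists>c. z = x + smul c w)"
  unfolding vext_def image_iff by auto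

lemma vextI: "x \<in> X \<Longrightarrow> x + smul c w \<in> vext X w"
  unfolding vext_iff by blast

lemma subsp_vext: assumes "subsp X" shows "subsp (vext X w)"
  unfolding subsp_def
proof (intro conjI ballI allI)
  have "(0::nat\<Rightarrow>'a) + smul 0 w \<in> vext X w" by (rule vextI) (use assms subspD(1) in auto)
  moreover have "(0::nat\<Rightarrow>'a) + smul 0 w = 0" by (simp add: fun_eq_iff)
  ultimately show "0 \<in> vext X w" by simp
next
  fix a b assume "a \<in> vext X w" "b \<in> vext X w"
  then obtain x y c d where h: "x\<in>X" "a = x + smul c w" "y\<in>X" "b = y + smul d w"
    unfolding vext_iff by blast
  have "a + b = (x + y) + smul (c + d) w" using h by (simp add: fun_eq_iff algebra_simps)
  moreover have "(x + y) + smul (c + d) w \<in> vext X w"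
    by (rule vextI) (use assms h subspD(2) in blast)
  ultimately show "a + b \<in> vext X w" by simp
next
  fix a e assume "a \<in> vext X w"
  then obtain x c where h: "x\<in>X" "a = x + smul c w" unfolding vext_iff by blast
  have "smul e a = smul e x + smul (e * c) w" using h by (simp add: fun_eq_iff algebra_simps)
  moreover have "smul e x + smul (e * c) w \<in> vext X w"
    by (rule vextI) (use assms h subspD(3) in blast)
  ultimately show "smul e a \<in> vext X w" by simp
qed

lemma vext_sub: assumes "subsp X" shows "X \<subseteq> vext X w"
proof
  fix x assume "x \<in> X"
  hence "x + smul 0 w \<in> vext X w" by (rule vextI)
  moreover have "x + smul 0 w = x" by (simp add: fun_eq_iff)
  ultimately show "x \<in> vext X w" by simp
qed

lemma vext_mem: assumes "subsp X" shows "w \<in> vext X w"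
proof -
  have "0 + smul 1 w \<in> vext X w" by (rule vextI) (use assms subspD(1) in auto)
  moreover have "(0::nat\<Rightarrow>'a) + smul 1 w = w" by (simp add: fun_eq_iff)
  ultimately show ?thesis by simp
qed

lemma vext_le: assumes "subsp A" "X \<subseteq> A" "w \<in> A" shows "vext X w \<subseteq> A"
proof
  fix z assume "z \<in> vext X w"
  then obtain x c where "x \<in> X" "z = x + smul c w" unfolding vext_iff by blast
  thus "z \<in> A" using assms subspD(2,3) by blast
qed

lemma smul_cancel: "(d::'a::field) \<noteq> 0 \<Longrightarrow> smul (inverse d) (smul d w) = w"
  by (simp add: fun_eq_iff)

lemma card_vext:
  fixes X :: "(nat \<Rightarrow> 'a::{finite,field}) set"
  assumes "subsp X" "finite X" "w \<notin> X"
  shows "finite (vext X w)" "card (vext X w) = card X * card (UNIV::'a set)"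
proof -
  let ?f = "\<lambda>p::(nat\<Rightarrow>'a) \<times> 'a. fst p + smul (snd p) w"
  have inj: "inj_on ?f (X \<times> UNIV)"
  proof (rule inj_onI)
    fix p1 p2 assume p: "p1 \<in> X \<times> UNIV" "p2 \<in> X \<times> UNIV" "?f p1 = ?f p2"
    obtain x1 c1 x2 c2 where pp: "p1 = (x1, c1)" "p2 = (x2, c2)" by fastforce
    have x: "x1 \<in> X" "x2 \<in> X" using p pp by auto
    have eq: "x1 + smul c1 w = x2 + smul c2 w" using p pp by simp
    have c: "c1 = c2"
    proof (rule ccontr)
      assume ne: "c1 \<noteq> c2"
      have "smul (c1 - c2) w = x2 - x1" using eq by (simp add: fun_eq_iff algebra_simps)
      hence "w = smul (inverse (c1 - c2)) (x2 - x1)" using smul_cancel[of "c1 - c2" w] ne by simp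
      moreover have "smul (inverse (c1 - c2)) (x2 - x1) \<in> X" using assms(1) x subsp_diff subspD(3) by blast
      ultimately show False using assms(3) by simp
    qed
    with eq have "x1 = x2" by simp
    with c pp show "p1 = p2" by simp
  qed
  have im: "?f ` (X \<times> UNIV) = vext X w" by (simp add: vext_def)
  show "finite (vext X w)" using assms(2) by (simp add: vext_def)
  show "card (vext X w) = card X * card (UNIV::'a set)"
    using card_image[OF inj] im by (simp add: card_cartesian_product)
qed

lemma dsub_vext: assumes "dsub X k" "w \<notin> X" shows "dsub (vext X w) (Suc k)"
  using assms card_vext[of X w] subsp_vext[of X w] by (simp add: dsub_def mult.commute)

lemma subsp_zero: "subsp {0::nat \<Rightarrow> 'a::field}"
  by (simp add: subsp_def fun_eq_iff)

lemma dsub_zero: "dsub {0::nat \<Rightarrow> 'a::{finite,field}} 0"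
  by (simp add: dsub_def subsp_zero)

lemma q_gt1: "1 < card (UNIV::'a::{finite,field} set)"
  using card_ge2[where 'a='a] by simp

lemma pow_aux:
  fixes Y :: "(nat \<Rightarrow> 'a::{finite,field}) set"
  assumes "subsp Y" "finite Y" "subsp X" "X \<subseteq> Y" "card X = card (UNIV::'a set) ^ j"
  shows "\<exists>k. card Y = card (UNIV::'a set) ^ k"
  using assms(3-5)
proof (induct "card Y - card X" arbitrary: X j rule: less_induct)
  case less
  show ?case
  proof (cases "X = Y")
    case True thus ?thesis using less(4) by blast
  next
    case False
    then obtain w where w: "w \<in> Y" "w \<notin> X" using less(3) by blast
    have finX: "finite X" using less(3) assms(2) by (rule finite_subset)
    have dX: "dsub X j" using less(2,4) finX by (simp add: dsub_def)
    have d: "dsub (vext X w) (Suc j)" using dsub_vext[OF dX w(2)] .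
    have le: "vext X w \<subseteq> Y" using vext_le[OF assms(1) less(3) w(1)] .
    have "card (UNIV::'a set) ^ j < card (UNIV::'a set) ^ Suc j"
      using power_strict_increasing_iff[OF q_gt1[where 'a='a]] by blast
    hence "card X < card (vext X w)" using d less(4) by (simp add: dsub_def)
    moreover have "card (vext X w) \<le> card Y" using card_mono[OF assms(2) le] .
    ultimately have lt: "card Y - card (vext X w) < card Y - card X" by linarith
    have "subsp (vext X w)" "card (vext X w) = card (UNIV::'a set) ^ Suc j" using d by (auto simp: dsub_def)
    thus ?thesis using less(1)[OF lt] le by blast
  qed
qed

lemma subsp_dsub: assumes "subsp Y" "finite Y" shows "\<exists>k. dsub Y k"
  using pow_aux[OF assms subsp_zero, of 0] assms by (auto simp: dsub_def subspD(1))

lemma dsub_mono: assumes "dsub X j" "dsub (Y::(nat\<Rightarrow>'a::{finite,field}) set) k" "X \<subseteq> Y" shows "j \<le> k"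
proof -
  have "card X \<le> card Y" using assms(2,3) card_mono[of Y X] by (simp add: dsub_def)
  hence "card (UNIV::'a set) ^ j \<le> card (UNIV::'a set) ^ k" using assms(1,2) by (simp add: dsub_def)
  thus ?thesis using power_le_imp_le_exp[OF q_gt1[where 'a='a]] by blast
qed

lemma dsub_eq: assumes "dsub X k" "dsub Y k" "X \<subseteq> Y" shows "X = Y"
proof -
  have "card X = card Y" "finite Y" using assms(1,2) by (simp_all add: dsub_def)
  thus ?thesis using card_subset_eq[of Y X] assms(3) by simp
qed

lemma dsub_psub: assumes "dsub X j" "dsub (Y::(nat\<Rightarrow>'a::{finite,field}) set) k" "X \<subseteq> Y" "X \<noteq> Y" shows "j < k"
proof -
  have "X \<subset> Y" using assms(3,4) by blast
  hence "card X < card Y" using assms(2) psubset_card_mono[of Y X] by (simp add: dsub_def)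
  hence "card (UNIV::'a set) ^ j < card (UNIV::'a set) ^ k" using assms(1,2) by (simp add: dsub_def)
  thus ?thesis using power_less_imp_less_exp[OF q_gt1[where 'a='a]] by blast
qed

lemma dsub_uniq: "dsub X j \<Longrightarrow> dsub X k \<Longrightarrow> j = k"
  using dsub_mono[of X j X k] dsub_mono[of X k X j] by simp

lemma dsub_dim_formula:
  fixes X :: "(nat \<Rightarrow> 'a::{finite,field}) set"
  assumes "dsub X a" "dsub Y b" "dsub (X \<inter> Y) c" "dsub (msum X Y) d"
  shows "d + c = a + b"
proof -
  have "card (msum X Y) * card (X \<inter> Y) = card X * card Y"
    using assms card_msum[of X Y] by (auto simp: dsub_def)
  hence "card (UNIV::'a set) ^ (d + c) = card (UNIV::'a set) ^ (a + b)"
    using assms by (simp add: dsub_def power_add)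
  thus ?thesis using power_inject_exp q_gt1 by blast
qed

lemma dsub_Int_ex: "dsub X a \<Longrightarrow> dsub Y b \<Longrightarrow> \<exists>c. dsub (X \<inter> Y) c"
  using subsp_dsub[of "X \<inter> Y"] subsp_Int by (auto simp: dsub_def)

lemma dsub_msum_ex: "dsub X a \<Longrightarrow> dsub Y b \<Longrightarrow> \<exists>d. dsub (msum X Y) d"
  using subsp_dsub[of "msum X Y"] subsp_msum finite_msum by (auto simp: dsub_def)

lemma finite_betw: "finite A \<Longrightarrow> finite (betw U A k)"
  by (rule finite_subset[of _ "Pow A"]) (auto simp: betw_def)

lemma vext_eq: assumes "dsub X k" "dsub Y (Suc k)" "X \<subseteq> Y" "w \<in> Y" "w \<notin> X"
  shows "vext X w = Y"
proof -
  have "vext X w \<subseteq> Y" using vext_le[of Y X w] assms by (simp add: dsub_def)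
  thus ?thesis using dsub_eq[OF dsub_vext[OF assms(1,5)] assms(2)] by simp
qed

lemma up_count:
  fixes X :: "(nat \<Rightarrow> 'a::{finite,field}) set"
  assumes X: "dsub X k" and A: "dsub A a" and XA: "X \<subseteq> A"
  shows "card (betw X A (Suc k)) * (card (UNIV::'a set) ^ Suc k - card (UNIV::'a set) ^ k)
         = card (UNIV::'a set) ^ a - card (UNIV::'a set) ^ k"
proof -
  let ?q = "card (UNIV::'a set)"
  let ?I = "betw X A (Suc k)"
  have finA: "finite A" using A by (simp add: dsub_def)
  have U: "A - X = (\<Union>Y\<in>?I. Y - X)"
  proof
    show "A - X \<subseteq> (\<Union>Y\<in>?I. Y - X)"
    proof
      fix w assume w: "w \<in> A - X"
      have "vext X w \<subseteq> A" using vext_le[of A X w] X A XA w by (auto simp: dsub_def)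
      moreover have "X \<subseteq> vext X w" using vext_sub[of X w] X by (simp add: dsub_def)
      ultimately have "vext X w \<in> ?I" using dsub_vext[OF X] w unfolding betw_def by blast
      moreover have "w \<in> vext X w - X" using vext_mem X w by (auto simp: dsub_def)
      ultimately show "w \<in> (\<Union>Y\<in>?I. Y - X)" by blast
    qed
  qed (auto simp: betw_def)
  have disj: "(Y1 - X) \<inter> (Y2 - X) = {}" if "Y1 \<in> ?I" "Y2 \<in> ?I" "Y1 \<noteq> Y2" for Y1 Y2
  proof (rule ccontr)
    assume "(Y1 - X) \<inter> (Y2 - X) \<noteq> {}"
    then obtain w where w: "w \<in> Y1" "w \<in> Y2" "w \<notin> X" by blast
    have d: "dsub (vext X w) (Suc k)" using dsub_vext[OF X w(3)] .
    have "vext X w = Y1" using that(1) w vext_eq[OF X, of Y1 w] by (simp add: betw_def)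
    moreover have "vext X w = Y2" using that(2) w vext_eq[OF X, of Y2 w] by (simp add: betw_def)
    ultimately show False using that by simp
  qed
  have "card (A - X) = (\<Sum>Y\<in>?I. card (Y - X))"
    unfolding U
  proof (rule card_UN_disjoint)
    show "finite ?I" by (rule finite_betw[OF finA])
    show "\<forall>Y\<in>?I. finite (Y - X)" by (simp add: betw_def dsub_def)
    show "\<forall>Y1\<in>?I. \<forall>Y2\<in>?I. Y1 \<noteq> Y2 \<longrightarrow> (Y1 - X) \<inter> (Y2 - X) = {}" using disj by blast
  qed
  also have "\<dots> = (\<Sum>Y\<in>?I. ?q ^ Suc k - ?q ^ k)"
    by (rule sum.cong) (use X in \<open>auto simp: betw_def dsub_def card_Diff_subset finite_subset\<close>)
  finally have "card (A - X) = card ?I * (?q ^ Suc k - ?q ^ k)" by simp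
  moreover have "card (A - X) = ?q ^ a - ?q ^ k" using X A XA finA by (simp add: card_Diff_subset finite_subset dsub_def)
  ultimately show ?thesis by simp
qed


lemma dc_sum:
  assumes "finite I" "finite J"
  shows "(\<Sum>x\<in>I. \<Sum>y\<in>{y\<in>J. R x y}. f x y) = (\<Sum>y\<in>J. \<Sum>x\<in>{x\<in>I. R x y}. (f x y :: 'c::comm_monoid_add))"
proof -
  have "(\<Sum>x\<in>I. \<Sum>y\<in>{y\<in>J. R x y}. f x y) = (\<Sum>x\<in>I. \<Sum>y\<in>J. if R x y then f x y else 0)"
    using assms by (simp add: sum.inter_filter)
  also have "\<dots> = (\<Sum>y\<in>J. \<Sum>x\<in>I. if R x y then f x y else 0)" by (rule sum.swap)
  also have "\<dots> = (\<Sum>y\<in>J. \<Sum>x\<in>{x\<in>I. R x y}. f x y)"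
    using assms by (simp add: sum.inter_filter)
  finally show ?thesis .
qed

lemma dc_card:
  assumes "finite I" "finite J"
  shows "(\<Sum>x\<in>I. card {y\<in>J. R x y}) = (\<Sum>y\<in>J. card {x\<in>I. R x y})"
  using dc_sum[OF assms, where R=R and f="\<lambda>_ _. 1::nat"] by simp

definition GG :: "nat \<Rightarrow> nat \<Rightarrow> nat \<Rightarrow> real" where
  "GG q a k = (\<Prod>i<k. real q ^ a - real q ^ i)"

definition FF :: "nat \<Rightarrow> nat \<Rightarrow> nat \<Rightarrow> nat \<Rightarrow> real" where
  "FF q j a k = (GG q a k / GG q a j) / (GG q k k / GG q k j)"

lemma GG_pos: assumes "1 < q" "k \<le> a" shows "GG q a k > 0"
  unfolding GG_def
proof (rule prod_pos)
  fix i assume "i \<in> {..<k}"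
  hence "i < a" using assms by simp
  thus "real q ^ a - real q ^ i > 0" using assms by (simp add: power_strict_increasing)
qed

lemma GG_Suc: "GG q a (Suc k) = GG q a k * (real q ^ a - real q ^ k)"
  by (simp add: GG_def)

lemma FF_same: assumes "1 < q" "j \<le> a" shows "FF q j a j = 1"
  using GG_pos[OF assms(1) assms(2)] GG_pos[OF assms(1), of j j] by (simp add: FF_def)

lemma FF_alg:
  fixes gak gaj gkj gkk g1j g1k x y :: real
  assumes "gak \<noteq> 0" "gaj \<noteq> 0" "gkj \<noteq> 0" "gkk \<noteq> 0" "g1j \<noteq> 0" "g1k \<noteq> 0" "y \<noteq> 0"
  shows "(gak / gaj) / (gkk / gkj) * (x / y) = ((gak * x) / gaj) / ((g1k * y) / g1j) * ((g1k / g1j) / (gkk / gkj))"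
  using assms by (simp add: field_simps)

lemma FF_step:
  assumes q: "1 < q" and jk: "j \<le> k" and ka: "Suc k \<le> a"
  shows "FF q j a k * ((real q ^ a - real q ^ k) / (real q ^ Suc k - real q ^ k))
         = FF q j a (Suc k) * FF q j (Suc k) k"
proof -
  have p1: "GG q a j > 0" "GG q a k > 0" "GG q k j > 0" "GG q k k > 0"
     "GG q (Suc k) j > 0" "GG q (Suc k) k > 0"
    using GG_pos[OF q] jk ka by auto
  have d: "real q ^ Suc k - real q ^ k > 0" using q by (simp add: power_strict_increasing)
  show ?thesis
    unfolding FF_def GG_Suc[of q a k] GG_Suc[of q "Suc k" k]
    by (rule FF_alg) (use p1 d q in auto)
qed

lemma betw_base:
  assumes "dsub U j" "U \<subseteq> A"
  shows "betw U A j = {U}"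
  using assms dsub_eq[of U j] unfolding betw_def by blast

lemma count_aux:
  fixes U :: "(nat \<Rightarrow> 'a::{finite,field}) set"
  assumes U: "dsub U j"
  shows "\<And>A a. dsub A a \<Longrightarrow> U \<subseteq> A \<Longrightarrow> j + d \<le> a \<Longrightarrow>
          real (card (betw U A (j + d))) = FF (card (UNIV::'a set)) j a (j + d)"
proof (induct d)
  case 0
  thus ?case using betw_base[OF U] FF_same[OF q_gt1[where 'a='a]] by simp
next
  case (Suc d A a)
  let ?q = "card (UNIV::'a set)"
  define k where "k = j + d"
  have ka: "Suc k \<le> a" using Suc k_def by simp
  have fA: "finite A" using Suc by (simp add: dsub_def)
  let ?I = "betw U A k" and ?J = "betw U A (Suc k)"
  have dc: "(\<Sum>X\<in>?I. card {Y\<in>?J. X \<subseteq> Y}) = (\<Sum>Y\<in>?J. card {X\<in>?I. X \<subseteq> Y})"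
    by (rule dc_card[OF finite_betw[OF fA] finite_betw[OF fA]])
  have l: "real (card {Y\<in>?J. X \<subseteq> Y}) = (real ?q ^ a - real ?q ^ k) / (real ?q ^ Suc k - real ?q ^ k)"
    if "X \<in> ?I" for X
  proof -
    have e: "{Y\<in>?J. X \<subseteq> Y} = betw X A (Suc k)" using that by (auto simp: betw_def)
    have X: "dsub X k" "X \<subseteq> A" using that by (auto simp: betw_def)
    have "card (betw X A (Suc k)) * (?q ^ Suc k - ?q ^ k) = ?q ^ a - ?q ^ k"
      by (rule up_count[OF X(1) Suc(2) X(2)])
    hence h: "real (card (betw X A (Suc k)) * (?q ^ Suc k - ?q ^ k)) = real (?q ^ a - ?q ^ k)"
      by (simp only:)
    have le1: "?q ^ k \<le> ?q ^ Suc k" using q_gt1[where 'a='a] by (intro power_increasing) auto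
    have le2: "?q ^ k \<le> ?q ^ a" using q_gt1[where 'a='a] ka by (intro power_increasing) auto
    have "real (card (betw X A (Suc k))) * (real ?q ^ Suc k - real ?q ^ k) = real ?q ^ a - real ?q ^ k"
      using h unfolding of_nat_mult of_nat_diff[OF le1] of_nat_diff[OF le2] of_nat_power .
    moreover have "real ?q ^ Suc k - real ?q ^ k > 0" using q_gt1[where 'a='a] by (simp add: power_strict_increasing)
    ultimately show ?thesis unfolding e by (intro eq_divide_imp) auto
  qed
  have r: "real (card {X\<in>?I. X \<subseteq> Y}) = FF ?q j (Suc k) k" if "Y \<in> ?J" for Y
  proof -
    have e: "{X\<in>?I. X \<subseteq> Y} = betw U Y k" using that by (auto simp: betw_def)
    have Y: "dsub Y (Suc k)" "U \<subseteq> Y" using that by (auto simp: betw_def)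
    show ?thesis using Suc(1)[OF Y(1) Y(2)] e k_def by simp
  qed
  have eq1: "real (card ?I) * ((real ?q ^ a - real ?q ^ k) / (real ?q ^ Suc k - real ?q ^ k))
        = real (card ?J) * FF ?q j (Suc k) k"
  proof -
    have "real (card ?I) * ((real ?q ^ a - real ?q ^ k) / (real ?q ^ Suc k - real ?q ^ k))
          = (\<Sum>X\<in>?I. real (card {Y\<in>?J. X \<subseteq> Y}))" using l by simp
    also have "\<dots> = (\<Sum>Y\<in>?J. real (card {X\<in>?I. X \<subseteq> Y}))"
      using arg_cong[OF dc, of real] by simp
    also have "\<dots> = real (card ?J) * FF ?q j (Suc k) k" using r by simp
    finally show ?thesis .
  qed
  have eq2: "real (card ?I) = FF ?q j a k" using Suc(1)[OF Suc(2,3)] ka k_def by simp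
  have "real (card ?J) * FF ?q j (Suc k) k
        = FF ?q j a k * ((real ?q ^ a - real ?q ^ k) / (real ?q ^ Suc k - real ?q ^ k))"
    using eq1 eq2 by simp
  also have "\<dots> = FF ?q j a (Suc k) * FF ?q j (Suc k) k"
    by (rule FF_step[OF q_gt1[where 'a='a]]) (use ka k_def in auto)
  finally have eq3: "real (card ?J) * FF ?q j (Suc k) k = FF ?q j a (Suc k) * FF ?q j (Suc k) k" .
  moreover have "FF ?q j (Suc k) k > 0"
    unfolding FF_def using GG_pos[OF q_gt1[where 'a='a]] k_def by (simp add: divide_pos_pos)
  ultimately have "real (card ?J) = FF ?q j a (Suc k)" by simp
  thus ?case using k_def by simp
qed

lemma count_betw:
  fixes U :: "(nat \<Rightarrow> 'a::{finite,field}) set"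
  assumes "dsub U j" "dsub A a" "U \<subseteq> A" "j \<le> k" "k \<le> a"
  shows "real (card (betw U A k)) = FF (card (UNIV::'a set)) j a k"
  using count_aux[OF assms(1) assms(2,3), of "k - j"] assms(4,5) by simp


lemma GG_split: "j \<le> k \<Longrightarrow> GG q a k = GG q a j * (\<Prod>i\<in>{j..<k}. real q ^ a - real q ^ i)"
  unfolding GG_def
  by (metis (no_types, lifting) prod.atLeastLessThan_concat lessThan_atLeast0 zero_le)

lemma FF_eval:
  assumes "1 < q" "j \<le> k" "k \<le> a"
  shows "FF q j a k = (\<Prod>i\<in>{j..<k}. real q ^ a - real q ^ i) / (\<Prod>i\<in>{j..<k}. real q ^ k - real q ^ i)"
proof -
  have "GG q a j > 0" "GG q k j > 0" using GG_pos[OF assms(1)] assms by auto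
  thus ?thesis unfolding FF_def GG_split[OF assms(2), of q a] GG_split[OF assms(2), of q k]
    by simp
qed

lemma ivl_simps:
  "{2..<4::nat} = {2,3}" "{0..<4::nat} = {0,1,2,3}" "{2..<3::nat} = {2}" "{0..<3::nat} = {0,1,2}"
  "{1..<2::nat} = {1}" "{0..<1::nat} = {0}" "{0..<2::nat} = {0,1}" "{Suc 0..<2::nat} = {Suc 0}"
  by auto

lemma xpos: "1 < (x::real) \<Longrightarrow> i < k \<Longrightarrow> x ^ k - x ^ i \<noteq> 0"
  by (simp add: power_strict_increasing)

lemma FF_254: assumes "1 < q" shows "FF q 2 5 4 = real (q^2 + q + 1)"
proof -
  let ?x = "real q"
  have x: "?x > 1" using assms by simp
  have d: "(?x^4 - ?x^2) * (?x^4 - ?x^3) \<noteq> 0" using xpos[OF x] by simp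
  have "FF q 2 5 4 = ((?x^5 - ?x^2) * (?x^5 - ?x^3)) / ((?x^4 - ?x^2) * (?x^4 - ?x^3))"
    using FF_eval[OF assms, of 2 4 5] by (simp add: ivl_simps)
  also have "\<dots> = ?x^2 + ?x + 1" by (rule divide_eq_imp[OF d]) algebra
  finally show ?thesis by simp
qed

lemma FF_054: assumes "1 < q" shows "FF q 0 5 4 = real (q^4 + q^3 + q^2 + q + 1)"
proof -
  let ?x = "real q"
  have x: "?x > 1" using assms by simp
  have d: "(?x^4 - 1) * ((?x^4 - ?x) * ((?x^4 - ?x^2) * (?x^4 - ?x^3))) \<noteq> 0"
    using xpos[OF x, of 0 4] xpos[OF x, of 1 4] xpos[OF x, of 2 4] xpos[OF x, of 3 4] by simp
  have "FF q 0 5 4 = ((?x^5 - 1) * ((?x^5 - ?x) * ((?x^5 - ?x^2) * (?x^5 - ?x^3)))) /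
      ((?x^4 - 1) * ((?x^4 - ?x) * ((?x^4 - ?x^2) * (?x^4 - ?x^3))))"
    using FF_eval[OF assms, of 0 4 5] by (simp add: ivl_simps)
  also have "\<dots> = ?x^4 + ?x^3 + ?x^2 + ?x + 1" by (rule divide_eq_imp[OF d]) algebra
  finally show ?thesis by simp
qed

lemma FF_243: assumes "1 < q" shows "FF q 2 4 3 = real (q + 1)"
proof -
  let ?x = "real q"
  have x: "?x > 1" using assms by simp
  have d: "(?x^3 - ?x^2) \<noteq> 0" using xpos[OF x] by simp
  have "FF q 2 4 3 = (?x^4 - ?x^2) / (?x^3 - ?x^2)"
    using FF_eval[OF assms, of 2 3 4] by (simp add: ivl_simps)
  also have "\<dots> = ?x + 1" by (rule divide_eq_imp[OF d]) algebra
  finally show ?thesis by simp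
qed

lemma FF_043: assumes "1 < q" shows "FF q 0 4 3 = real (q^3 + q^2 + q + 1)"
proof -
  let ?x = "real q"
  have x: "?x > 1" using assms by simp
  have d: "(?x^3 - 1) * ((?x^3 - ?x) * (?x^3 - ?x^2)) \<noteq> 0"
    using xpos[OF x, of 0 3] xpos[OF x, of 1 3] xpos[OF x, of 2 3] by simp
  have "FF q 0 4 3 = ((?x^4 - 1) * ((?x^4 - ?x) * (?x^4 - ?x^2))) / ((?x^3 - 1) * ((?x^3 - ?x) * (?x^3 - ?x^2)))"
    using FF_eval[OF assms, of 0 3 4] by (simp add: ivl_simps)
  also have "\<dots> = ?x^3 + ?x^2 + ?x + 1" by (rule divide_eq_imp[OF d]) algebra
  finally show ?thesis by simp
qed

lemma FF_253: assumes "1 < q" shows "FF q 2 5 3 = real (q^2 + q + 1)"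
proof -
  let ?x = "real q"
  have x: "?x > 1" using assms by simp
  have d: "(?x^3 - ?x^2) \<noteq> 0" using xpos[OF x] by simp
  have "FF q 2 5 3 = (?x^5 - ?x^2) / (?x^3 - ?x^2)"
    using FF_eval[OF assms, of 2 3 5] by (simp add: ivl_simps)
  also have "\<dots> = ?x^2 + ?x + 1" by (rule divide_eq_imp[OF d]) algebra
  finally show ?thesis by simp
qed

lemma FF_142: assumes "1 < q" shows "FF q 1 4 2 = real (q^2 + q + 1)"
proof -
  let ?x = "real q"
  have x: "?x > 1" using assms by simp
  have d: "(?x^2 - ?x) \<noteq> 0" using xpos[OF x, of 1 2] by simp
  have "FF q 1 4 2 = (?x^4 - ?x) / (?x^2 - ?x)"
    using FF_eval[OF assms, of 1 2 4] by (simp add: ivl_simps)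
  also have "\<dots> = ?x^2 + ?x + 1" by (rule divide_eq_imp[OF d]) algebra
  finally show ?thesis by simp
qed

lemma FF_021: assumes "1 < q" shows "FF q 0 2 1 = real (q + 1)"
proof -
  let ?x = "real q"
  have x: "?x > 1" using assms by simp
  have d: "(?x - 1) \<noteq> 0" using x by simp
  have "FF q 0 2 1 = (?x^2 - 1) / (?x - 1)"
    using FF_eval[OF assms, of 0 1 2] by (simp add: ivl_simps)
  also have "\<dots> = ?x + 1" by (rule divide_eq_imp[OF d]) algebra
  finally show ?thesis by simp
qed

lemma FF_041: assumes "1 < q" shows "FF q 0 4 1 = real (q^3 + q^2 + q + 1)"
proof -
  let ?x = "real q"
  have x: "?x > 1" using assms by simp
  have d: "(?x - 1) \<noteq> 0" using x by simp
  have "FF q 0 4 1 = (?x^4 - 1) / (?x - 1)"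
    using FF_eval[OF assms, of 0 1 4] by (simp add: ivl_simps)
  also have "\<dots> = ?x^3 + ?x^2 + ?x + 1" by (rule divide_eq_imp[OF d]) algebra
  finally show ?thesis by simp
qed

lemma FF_042: assumes "1 < q" shows "FF q 0 4 2 = real ((q^2 + 1) * (q^2 + q + 1))"
proof -
  let ?x = "real q"
  have x: "?x > 1" using assms by simp
  have d: "(?x^2 - 1) * (?x^2 - ?x) \<noteq> 0" using xpos[OF x, of 0 2] xpos[OF x, of 1 2] by simp
  have "FF q 0 4 2 = ((?x^4 - 1) * (?x^4 - ?x)) / ((?x^2 - 1) * (?x^2 - ?x))"
    using FF_eval[OF assms, of 0 2 4] by (simp add: ivl_simps)
  also have "\<dots> = (?x^2 + 1) * (?x^2 + ?x + 1)" by (rule divide_eq_imp[OF d]) algebra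
  finally show ?thesis by (simp only: of_nat_mult of_nat_add of_nat_power of_nat_1)
qed

lemma FF_ratio:
  assumes "1 < q" "5 \<le> N"
  shows "FF q 0 N 5 = FF q 2 N 5 * ((real q ^ N - 1) * (real q ^ N - real q) / ((real q ^ 5 - 1) * (real q ^ 5 - real q)))"
proof -
  have p: "GG q N 2 > 0" "GG q 5 2 > 0" "GG q N 5 > 0" "GG q 5 5 > 0" using GG_pos[OF assms(1)] assms(2) by auto
  have g: "GG q a 2 = (real q ^ a - 1) * (real q ^ a - real q)" for a
    by (simp add: GG_def numeral_eq_Suc)
  have "FF q 0 N 5 = FF q 2 N 5 * (GG q N 2 / GG q 5 2)"
    unfolding FF_def using p by (simp add: field_simps GG_def[of q _ 0])
  thus ?thesis by (simp add: g)
qed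

lemma zero_sub: "dsub X k \<Longrightarrow> {0} \<subseteq> X"
  by (simp add: dsub_def subsp_def)

lemma of_nat_eqI: "real a = real b \<Longrightarrow> a = b" by simp

context
  fixes dummy :: "'a::{finite,field} itself"
begin
end

lemma cnt:
  fixes U :: "(nat \<Rightarrow> 'a::{finite,field}) set"
  assumes "dsub U j" "dsub A a" "U \<subseteq> A" "j \<le> k" "k \<le> a" "FF (card (UNIV::'a set)) j a k = real v"
  shows "card (betw U A k) = v"
  using count_betw[OF assms(1-5)] assms(6) by simp

lemmas q1 = q_gt1


lemma sum_ge1_eq:
  assumes "finite J" "\<And>x. x \<in> J \<Longrightarrow> f x \<ge> (1::nat)" "sum f J = card J"
  shows "\<And>x. x \<in> J \<Longrightarrow> f x = 1"
proof -
  have "sum f J = sum (\<lambda>x. (f x - 1) + 1) J"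
  proof (rule sum.cong)
    fix x assume "x \<in> J"
    hence "f x \<ge> 1" by (rule assms(2))
    thus "f x = f x - 1 + 1" by simp
  qed simp
  also have "\<dots> = sum (\<lambda>x. f x - 1) J + card J"
    by (simp only: sum.distrib card_eq_sum)
  finally have "sum (\<lambda>x. f x - 1) J = 0" using assms(3) by simp
  hence z: "\<forall>x\<in>J. f x - 1 = 0" using assms(1) by simp
  fix x assume x: "x \<in> J"
  have "f x \<le> 1" using z x by auto
  thus "f x = 1" using assms(2)[OF x] by (rule le_antisym)
qed

lemma sum_ge1:
  assumes "\<And>x. x \<in> J \<Longrightarrow> f x \<ge> (1::nat)"
  shows "sum f J \<ge> card J"
  using sum_mono[of J "\<lambda>_. 1" f] assms by simp

locale pg4 =
  fixes W :: "(nat \<Rightarrow> 'a::{finite,field}) set" and B :: "(nat \<Rightarrow> 'a) set set" and qq :: nat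
  assumes qq_def: "qq = card (UNIV::'a set)"
  and W: "dsub W 5"
  and B: "\<And>L. L \<in> B \<Longrightarrow> dsub L 2 \<and> L \<subseteq> W"
  and blk: "\<And>P. dsub P 3 \<Longrightarrow> P \<subseteq> W \<Longrightarrow> \<exists>L\<in>B. L \<subseteq> P"
begin


definition mm :: "(nat \<Rightarrow> 'a) set \<Rightarrow> nat" where "mm P = card {L\<in>B. L \<subseteq> P}"

definition BS :: "(nat \<Rightarrow> 'a) set \<Rightarrow> (nat \<Rightarrow> 'a) set set" where "BS S = {L\<in>B. L \<subseteq> S}"

lemma finW: "finite W" using W by (simp add: dsub_def)

lemma finB: "finite B"
  by (rule finite_subset[of B "Pow W"]) (use B finW in auto)

lemma q1': "1 < qq" unfolding qq_def by (rule q_gt1)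

lemma cntq:
  fixes U :: "(nat \<Rightarrow> 'a) set"
  assumes "dsub U j" "dsub A a" "U \<subseteq> A" "j \<le> k" "k \<le> a" "FF qq j a k = real v"
  shows "card (betw U A k) = v"
  using cnt[OF assms(1-5), of v] assms(6) qq_def by simp

lemma mm_pos: assumes "dsub P 3" "P \<subseteq> W" shows "mm P \<ge> 1"
proof -
  obtain L where "L \<in> B" "L \<subseteq> P" using blk[OF assms] by blast
  hence "{L\<in>B. L \<subseteq> P} \<noteq> {}" by blast
  moreover have "finite {L\<in>B. L \<subseteq> P}" using finB by simp
  ultimately show ?thesis unfolding mm_def by (simp add: Suc_le_eq card_gt_0_iff)
qed

lemma solid_sum:
  assumes S: "dsub S 4" "S \<subseteq> W"
  shows "card (BS S) * (qq + 1) = (\<Sum>P\<in>betw {0} S 3. mm P)"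
proof -
  have fS: "finite S" using S by (simp add: dsub_def)
  have fI: "finite (BS S)" using finB by (simp add: BS_def)
  have dc: "(\<Sum>L\<in>BS S. card {P\<in>betw {0} S 3. L \<subseteq> P}) = (\<Sum>P\<in>betw {0} S 3. card {L\<in>BS S. L \<subseteq> P})"
    by (rule dc_card[OF fI finite_betw[OF fS]])
  have l: "card {P\<in>betw {0} S 3. L \<subseteq> P} = qq + 1" if "L \<in> BS S" for L
  proof -
    have L: "dsub L 2" "L \<subseteq> S" using that B by (auto simp: BS_def)
    have "{P\<in>betw {0} S 3. L \<subseteq> P} = betw L S 3" using zero_sub by (auto simp: betw_def)
    thus ?thesis using cntq[OF L(1) S(1) L(2), of 3 "qq + 1"] FF_243[OF q1'] by simp
  qed
  have r: "card {L\<in>BS S. L \<subseteq> P} = mm P" if "P \<in> betw {0} S 3" for P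
  proof -
    have "{L\<in>BS S. L \<subseteq> P} = {L\<in>B. L \<subseteq> P}" using that by (auto simp: BS_def betw_def)
    thus ?thesis by (simp add: mm_def)
  qed
  have "(\<Sum>L\<in>BS S. card {P\<in>betw {0} S 3. L \<subseteq> P}) = card (BS S) * (qq + 1)" using l by simp
  moreover have "(\<Sum>P\<in>betw {0} S 3. card {L\<in>BS S. L \<subseteq> P}) = (\<Sum>P\<in>betw {0} S 3. mm P)"
    using r by simp
  ultimately show ?thesis using dc by simp
qed

lemma solid_planes: fixes S :: "(nat \<Rightarrow> 'a) set" assumes "dsub S 4" shows "card (betw {0} S 3) = (qq + 1) * (qq^2 + 1)"
proof -
  have "card (betw {0} S 3) = qq^3 + qq^2 + qq + 1"
    by (rule cntq[OF dsub_zero assms zero_sub[OF assms]]) (use FF_043[OF q1'] in auto)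
  moreover have "(qq::nat)^3 + qq^2 + qq + 1 = (qq + 1) * (qq^2 + 1)" by algebra
  ultimately show ?thesis by simp
qed

lemma solid_ge:
  assumes S: "dsub S 4" "S \<subseteq> W"
  shows "card (BS S) \<ge> qq^2 + 1"
proof -
  have "(\<Sum>P\<in>betw {0} S 3. mm P) \<ge> card (betw {0} S 3)"
    by (rule sum_ge1) (use mm_pos S in \<open>auto simp: betw_def\<close>)
  hence "card (BS S) * (qq + 1) \<ge> (qq^2 + 1) * (qq + 1)" using solid_sum[OF S] solid_planes[OF S(1)]
    by (simp only: mult.commute)
  thus ?thesis by (simp only: mult_le_cancel2)
qed

lemma solid_eq:
  assumes S: "dsub S 4" "S \<subseteq> W" and c: "card (BS S) = qq^2 + 1"
  shows "\<And>P. P \<in> betw {0} S 3 \<Longrightarrow> mm P = 1"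
proof -
  have fS: "finite S" using S by (simp add: dsub_def)
  have "(\<Sum>P\<in>betw {0} S 3. mm P) = card (betw {0} S 3)"
    using solid_sum[OF S] solid_planes[OF S(1)] c by (simp only: mult.commute)
  moreover have "\<And>P. P \<in> betw {0} S 3 \<Longrightarrow> mm P \<ge> 1" using mm_pos S by (auto simp: betw_def)
  ultimately show "\<And>P. P \<in> betw {0} S 3 \<Longrightarrow> mm P = 1"
    using sum_ge1_eq[OF finite_betw[OF fS], where f=mm] by blast
qed

lemma solids_sum:
  "(\<Sum>S\<in>betw {0} W 4. card (BS S)) = card B * (qq^2 + qq + 1)"
proof -
  have dc: "(\<Sum>L\<in>B. card {S\<in>betw {0} W 4. L \<subseteq> S}) = (\<Sum>S\<in>betw {0} W 4. card {L\<in>B. L \<subseteq> S})"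
    by (rule dc_card[OF finB finite_betw[OF finW]])
  have l: "card {S\<in>betw {0} W 4. L \<subseteq> S} = qq^2 + qq + 1" if "L \<in> B" for L
  proof -
    have L: "dsub L 2" "L \<subseteq> W" using that B by auto
    have "{S\<in>betw {0} W 4. L \<subseteq> S} = betw L W 4" using zero_sub by (auto simp: betw_def)
    thus ?thesis using cntq[OF L(1) W L(2), of 4 "qq^2 + qq + 1"] FF_254[OF q1'] by simp
  qed
  show ?thesis using dc l by (simp add: BS_def)
qed

lemma n_solids: "card (betw {0} W 4) = qq^4 + qq^3 + qq^2 + qq + 1"
  by (rule cntq[OF dsub_zero W zero_sub[OF W]]) (use FF_054[OF q1'] in auto)

lemma arith_step2:
  fixes b q :: nat
  assumes "b * (q^2 + q + 1) \<ge> (q^4 + q^3 + q^2 + q + 1) * (q^2 + 2)"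
  shows "b \<ge> q^4 + 2*q^2 + q + 1"
proof (rule ccontr)
  assume "\<not> ?thesis"
  hence "b \<le> q^4 + 2*q^2 + q" by simp
  hence "b * (q^2 + q + 1) \<le> (q^4 + 2*q^2 + q) * (q^2 + q + 1)" by (rule mult_right_mono) simp
  moreover have "(q^4 + 2*q^2 + q) * (q^2 + q + 1) + (q + 2) = (q^4 + q^3 + q^2 + q + 1) * (q^2 + 2)"
    by (simp add: algebra_simps power2_eq_square power3_eq_cube power4_eq_xxxx)
  ultimately show False using assms by linarith
qed

lemma case_nonspread:
  assumes "\<And>S. S \<in> betw {0} W 4 \<Longrightarrow> card (BS S) \<ge> qq^2 + 2"
  shows "card B \<ge> qq^4 + 2*qq^2 + qq + 1"
proof -
  have "(\<Sum>S\<in>betw {0} W 4. card (BS S)) \<ge> (\<Sum>S\<in>betw {0} W 4. qq^2 + 2)"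
    by (rule sum_mono) (use assms in auto)
  hence "card B * (qq^2 + qq + 1) \<ge> (qq^4 + qq^3 + qq^2 + qq + 1) * (qq^2 + 2)"
    using solids_sum n_solids by simp
  thus ?thesis by (rule arith_step2)
qed

end


abbreviation pts :: "(nat \<Rightarrow> 'a::{finite,field}) set \<Rightarrow> (nat \<Rightarrow> 'a) set set" where
  "pts A \<equiv> betw {0} A 1"

abbreviation lns :: "(nat \<Rightarrow> 'a::{finite,field}) set \<Rightarrow> (nat \<Rightarrow> 'a) set set" where
  "lns A \<equiv> betw {0} A 2"

lemma betw_mem: "X \<in> betw U A k \<longleftrightarrow> dsub X k \<and> U \<subseteq> X \<and> X \<subseteq> A"
  by (simp add: betw_def)

lemma pts_mem: "X \<in> pts A \<longleftrightarrow> dsub X 1 \<and> X \<subseteq> A"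
  using zero_sub[of X 1] by (auto simp: betw_def)

lemma lns_mem: "X \<in> lns A \<longleftrightarrow> dsub X 2 \<and> X \<subseteq> A"
  using zero_sub[of X 2] by (auto simp: betw_def)

lemma dsub_subsp: "dsub X k \<Longrightarrow> subsp X" by (simp add: dsub_def)

lemma msum_dsub_le:
  assumes "dsub X a" "dsub Y b" "dsub A c" "X \<subseteq> A" "Y \<subseteq> A"
  shows "msum X Y \<subseteq> A"
  using msum_le[OF dsub_subsp[OF assms(3)] assms(4,5)] .

locale spread = pg4 +
  fixes S :: "(nat \<Rightarrow> 'a) set"
  assumes S: "dsub S 4" "S \<subseteq> W" and Sc: "card (BS S) = qq^2 + 1"
begin

lemma plane1: "P \<in> betw {0} S 3 \<Longrightarrow> mm P = 1"
  by (rule solid_eq[OF S Sc])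

lemma one_line:
  assumes "dsub P 3" "P \<subseteq> S" "L1 \<in> B" "L2 \<in> B" "L1 \<subseteq> P" "L2 \<subseteq> P"
  shows "L1 = L2"
proof -
  have "P \<in> betw {0} S 3" unfolding betw_mem using assms(1,2) zero_sub[OF assms(1)] by blast
  hence "mm P = 1" by (rule plane1)
  hence "card {L\<in>B. L \<subseteq> P} = 1" by (simp only: mm_def)
  then obtain L where L: "{L\<in>B. L \<subseteq> P} = {L}" by (rule card_1_singletonE)
  have "L1 \<in> {L\<in>B. L \<subseteq> P}" "L2 \<in> {L\<in>B. L \<subseteq> P}" using assms(3-6) by simp_all
  thus ?thesis unfolding L by simp
qed

lemma sg_mem: "s \<in> BS S \<longleftrightarrow> s \<in> B \<and> s \<subseteq> S" by (simp add: BS_def)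

lemma sg_line: "s \<in> BS S \<Longrightarrow> dsub s 2" using B[of s] by (simp add: BS_def)

lemma S_sub: "subsp S" using S(1) by (rule dsub_subsp)

lemma sg_disj:
  assumes s: "s1 \<in> BS S" "s2 \<in> BS S" "s1 \<noteq> s2" and P: "dsub P 1" "P \<subseteq> s1" "P \<subseteq> s2"
  shows False
proof -
  have d1: "dsub s1 2" "dsub s2 2" using sg_line s by auto
  obtain c where c: "dsub (s1 \<inter> s2) c" using dsub_Int_ex[OF d1] by blast
  have "1 \<le> c" using dsub_mono[OF P(1) c] P by blast
  moreover have "c \<le> 2" using dsub_mono[OF c d1(1)] by blast
  moreover have "c \<noteq> 2"
  proof
    assume "c = 2"
    hence "s1 \<inter> s2 = s1" using dsub_eq[of "s1 \<inter> s2" 2 s1] c d1 by blast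
    hence "s1 \<subseteq> s2" by blast
    thus False using dsub_eq[OF d1] s(3) by blast
  qed
  ultimately have c1: "c = 1" by simp
  obtain d where d: "dsub (msum s1 s2) d" using dsub_msum_ex[OF d1] by blast
  have "d + c = 2 + 2" by (rule dsub_dim_formula[OF d1 c d])
  hence d3: "d = 3" using c1 by simp
  have le: "msum s1 s2 \<subseteq> S" using msum_dsub_le[OF d1 S(1)] s by (auto simp: BS_def)
  have "s1 \<subseteq> msum s1 s2" "s2 \<subseteq> msum s1 s2"
    using msum_sub1[OF dsub_subsp[OF d1(2)]] msum_sub2[OF dsub_subsp[OF d1(1)]] by auto
  hence "s1 = s2" using one_line[of "msum s1 s2" s1 s2] d d3 le s by (auto simp: BS_def)
  thus False using s(3) by simp
qed

lemma finS: "finite S" using S by (simp add: dsub_def)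

lemma n_pts_line: fixes l :: "(nat \<Rightarrow> 'a) set" assumes "dsub l 2" shows "card (pts l) = qq + 1"
  using cntq[OF dsub_zero assms zero_sub[OF assms], of 1 "qq + 1"] FF_021[OF q1'] by simp

lemma n_pts_S: "card (pts S) = (qq^2 + 1) * (qq + 1)"
proof -
  have "card (pts S) = qq^3 + qq^2 + qq + 1"
    by (rule cntq[OF dsub_zero S(1) zero_sub[OF S(1)]]) (use FF_041[OF q1'] in auto)
  moreover have "(qq::nat)^3 + qq^2 + qq + 1 = (qq^2 + 1) * (qq + 1)" by algebra
  ultimately show ?thesis by simp
qed

lemma sg_cover:
  assumes P: "P \<in> pts S"
  shows "\<exists>s\<in>BS S. P \<subseteq> s"
proof -
  let ?U = "\<Union>s\<in>BS S. pts s"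
  have fBS: "finite (BS S)" using finB by (simp add: BS_def)
  have sub: "?U \<subseteq> pts S"
  proof
    fix P assume "P \<in> ?U"
    then obtain s where "s \<in> BS S" "P \<in> pts s" by blast
    thus "P \<in> pts S" unfolding betw_mem sg_mem by blast
  qed
  have "card ?U = (\<Sum>s\<in>BS S. card (pts s))"
  proof (rule card_UN_disjoint[OF fBS])
    show "\<forall>s\<in>BS S. finite (pts s)"
    proof
      fix s assume "s \<in> BS S"
      hence "finite s" using sg_line[of s] by (simp add: dsub_def)
      thus "finite (pts s)" by (rule finite_betw)
    qed
    show "\<forall>s1\<in>BS S. \<forall>s2\<in>BS S. s1 \<noteq> s2 \<longrightarrow> pts s1 \<inter> pts s2 = {}"
    proof (intro ballI impI)
      fix s1 s2 assume h: "s1 \<in> BS S" "s2 \<in> BS S" "s1 \<noteq> s2"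
      show "pts s1 \<inter> pts s2 = {}"
      proof (rule ccontr)
        assume "pts s1 \<inter> pts s2 \<noteq> {}"
        then obtain P where "P \<in> pts s1" "P \<in> pts s2" by blast
        thus False using sg_disj[OF h, of P] unfolding pts_mem by blast
      qed
    qed
  qed
  also have "\<dots> = (\<Sum>s\<in>BS S. qq + 1)"
  proof (rule sum.cong)
    fix s assume "s \<in> BS S"
    thus "card (pts s) = qq + 1" using n_pts_line[OF sg_line] by blast
  qed simp
  also have "\<dots> = (qq^2 + 1) * (qq + 1)" using Sc by simp
  finally have "card ?U = card (pts S)" using n_pts_S by simp
  hence "?U = pts S" using card_subset_eq[OF finite_betw[OF finS] sub] by simp
  hence "P \<in> ?U" using P by simp
  then obtain s where "s \<in> BS S" "P \<in> pts s" by blast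
  thus ?thesis unfolding betw_mem by blast
qed

definition sp :: "(nat \<Rightarrow> 'a) set \<Rightarrow> (nat \<Rightarrow> 'a) set" where
  "sp P = (THE s. s \<in> BS S \<and> P \<subseteq> s)"

lemma sp_uniq: assumes "P \<in> pts S" "s \<in> BS S" "P \<subseteq> s" shows "sp P = s"
proof -
  have u: "s' = s" if "s' \<in> BS S \<and> P \<subseteq> s'" for s'
  proof (rule ccontr)
    assume "s' \<noteq> s"
    moreover have "dsub P 1" using assms(1) unfolding pts_mem by blast
    ultimately show False using sg_disj[of s' s P] that assms(2,3) by blast
  qed
  have "s \<in> BS S \<and> P \<subseteq> s" using assms(2,3) by blast
  thus ?thesis unfolding sp_def using u by (rule the_equality)
qed

lemma sp: assumes "P \<in> pts S" shows "sp P \<in> BS S" "P \<subseteq> sp P"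
proof -
  obtain s where s: "s \<in> BS S" "P \<subseteq> s" using sg_cover[OF assms] by blast
  have "sp P = s" by (rule sp_uniq[OF assms s])
  thus "sp P \<in> BS S" "P \<subseteq> sp P" using s by simp_all
qed

end


lemma card_filter_sum: "finite A \<Longrightarrow> card {x\<in>A. P x} = (\<Sum>x\<in>A. if P x then 1 else 0)"
  using sum.inter_filter[of A "\<lambda>_. 1::nat" P] by simp

context spread
begin

definition OL :: "(nat \<Rightarrow> 'a) set set" where "OL = {L\<in>B. \<not> L \<subseteq> S}"

definition rr :: "(nat \<Rightarrow> 'a) set \<Rightarrow> nat" where "rr P = card {L\<in>OL. P \<subseteq> L}"

lemma finOL: "finite OL" using finB by (simp add: OL_def)

lemma OL_mem: "L \<in> OL \<longleftrightarrow> L \<in> B \<and> \<not> L \<subseteq> S" by (simp add: OL_def)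

lemma Bline: "L \<in> B \<Longrightarrow> dsub L 2" using B[of L] by simp
lemma BW: "L \<in> B \<Longrightarrow> L \<subseteq> W" using B[of L] by simp

lemma out_meet:
  assumes L: "L \<in> OL" shows "dsub (L \<inter> S) 1"
proof -
  have L2: "dsub L 2" "L \<subseteq> W" "\<not> L \<subseteq> S" using L Bline BW unfolding OL_mem by auto
  obtain d where d: "dsub (msum L S) d" using dsub_msum_ex[OF L2(1) S(1)] by blast
  have Sm: "S \<subseteq> msum L S" by (rule msum_sub2[OF dsub_subsp[OF L2(1)]])
  have Lm: "L \<subseteq> msum L S" by (rule msum_sub1[OF S_sub])
  have mW: "msum L S \<subseteq> W" by (rule msum_dsub_le[OF L2(1) S(1) W L2(2) S(2)])
  have "S \<noteq> msum L S" using Lm L2(3) by blast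
  hence "4 < d" using dsub_psub[OF S(1) d Sm] by blast
  moreover have "d \<le> 5" using dsub_mono[OF d W mW] .
  ultimately have d5: "d = 5" by simp
  obtain c where c: "dsub (L \<inter> S) c" using dsub_Int_ex[OF L2(1) S(1)] by blast
  have "d + c = 2 + 4" by (rule dsub_dim_formula[OF L2(1) S(1) c d])
  hence "c = 1" using d5 by simp
  thus ?thesis using c by simp
qed

lemma out_pt:
  assumes L: "L \<in> OL" and P: "P \<in> pts S" "P \<subseteq> L" shows "P = L \<inter> S"
proof -
  have "dsub P 1" "P \<subseteq> S" using P(1) unfolding pts_mem by auto
  moreover have "P \<subseteq> L \<inter> S" using P(2) calculation(2) by blast
  ultimately show ?thesis using dsub_eq[OF _ out_meet[OF L]] by blast
qed

lemma out_pts: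
  assumes L: "L \<in> OL" shows "{P\<in>pts S. P \<subseteq> L} = {L \<inter> S}"
proof -
  have "L \<inter> S \<in> pts S" unfolding pts_mem using out_meet[OF L] by blast
  thus ?thesis using out_pt[OF L] by blast
qed

lemma T_sum: "card OL = (\<Sum>P\<in>pts S. rr P)"
proof -
  have dc: "(\<Sum>P\<in>pts S. card {L\<in>OL. P \<subseteq> L}) = (\<Sum>L\<in>OL. card {P\<in>pts S. P \<subseteq> L})"
    by (rule dc_card[OF finite_betw[OF finS] finOL])
  have "(\<Sum>L\<in>OL. card {P\<in>pts S. P \<subseteq> L}) = (\<Sum>L\<in>OL. 1)"
  proof (rule sum.cong)
    fix L assume "L \<in> OL"
    show "card {P\<in>pts S. P \<subseteq> L} = 1" unfolding out_pts[OF \<open>L \<in> OL\<close>] by simp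
  qed simp
  thus ?thesis using dc by (simp add: rr_def)
qed

definition PL :: "(nat \<Rightarrow> 'a) set \<Rightarrow> (nat \<Rightarrow> 'a) set set" where
  "PL l = {P\<in>betw l W 3. \<not> P \<subseteq> S}"

definition ee :: "(nat \<Rightarrow> 'a) set \<Rightarrow> nat" where
  "ee l = (\<Sum>P\<in>PL l. mm P - 1)"

lemma finPL: "finite (PL l)" using finite_betw[OF finW] by (simp add: PL_def)

lemma in_PL:
  assumes l: "l \<in> lns S" "l \<notin> BS S" and P: "P \<in> PL l" and L: "L \<in> B" "L \<subseteq> P"
  shows "L \<in> OL \<and> L \<inter> S \<subseteq> l"
proof -
  have l2: "dsub l 2" "l \<subseteq> S" using l(1) unfolding lns_mem by auto
  have P3: "dsub P 3" "l \<subseteq> P" "P \<subseteq> W" "\<not> P \<subseteq> S" using P unfolding PL_def betw_mem by auto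
  obtain c where c: "dsub (P \<inter> S) c" using dsub_Int_ex[OF P3(1) S(1)] by blast
  have "l \<subseteq> P \<inter> S" using l2 P3 by blast
  hence c2: "2 \<le> c" using dsub_mono[OF l2(1) c] by blast
  have "P \<inter> S \<noteq> P" using P3(4) by blast
  hence "c < 3" using dsub_psub[OF c P3(1)] by blast
  hence "c = 2" using c2 by simp
  hence PS: "P \<inter> S = l" using dsub_eq[OF l2(1), of "P \<inter> S"] c \<open>l \<subseteq> P \<inter> S\<close> by simp
  have "\<not> L \<subseteq> S"
  proof
    assume "L \<subseteq> S"
    hence "L \<subseteq> l" using L(2) PS by blast
    hence "L = l" using dsub_eq[OF Bline[OF L(1)] l2(1)] by blast
    hence "l \<in> BS S" using L(1) l2(2) unfolding sg_mem by simp
    thus False using l(2) by simp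
  qed
  moreover have "L \<inter> S \<subseteq> l" using L(2) PS by blast
  ultimately show ?thesis using L(1) unfolding OL_mem by blast
qed

lemma plane_of:
  assumes l: "l \<in> lns S" and L: "L \<in> OL" "L \<inter> S \<subseteq> l"
  shows "msum L l \<in> PL l" "L \<subseteq> msum L l" "\<And>P. P \<in> PL l \<Longrightarrow> L \<subseteq> P \<Longrightarrow> P = msum L l"
proof -
  have l2: "dsub l 2" "l \<subseteq> S" using l unfolding lns_mem by auto
  have L2: "dsub L 2" "L \<subseteq> W" "\<not> L \<subseteq> S" using L Bline BW unfolding OL_mem by auto
  have "L \<inter> l = L \<inter> S" using L(2) l2(2) by blast
  hence c: "dsub (L \<inter> l) 1" using out_meet[OF L(1)] by simp
  obtain d where d: "dsub (msum L l) d" using dsub_msum_ex[OF L2(1) l2(1)] by blast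
  have "d + 1 = 2 + 2" by (rule dsub_dim_formula[OF L2(1) l2(1) c d])
  hence d3: "dsub (msum L l) 3" using d by simp
  have lm: "l \<subseteq> msum L l" by (rule msum_sub2[OF dsub_subsp[OF L2(1)]])
  show Lm: "L \<subseteq> msum L l" by (rule msum_sub1[OF dsub_subsp[OF l2(1)]])
  have mW: "msum L l \<subseteq> W" using msum_dsub_le[OF L2(1) l2(1) W L2(2)] l2(2) S(2) by blast
  have "\<not> msum L l \<subseteq> S" using Lm L2(3) by blast
  thus "msum L l \<in> PL l" unfolding PL_def betw_mem using d3 lm mW by blast
  fix P assume P: "P \<in> PL l" "L \<subseteq> P"
  have P3: "dsub P 3" "l \<subseteq> P" using P unfolding PL_def betw_mem by auto
  have "msum L l \<subseteq> P" by (rule msum_le[OF dsub_subsp[OF P3(1)] P(2) P3(2)])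
  thus "P = msum L l" using dsub_eq[OF d3 P3(1)] by simp
qed

lemma n_PL: assumes l: "l \<in> lns S" shows "card (PL l) = qq^2"
proof -
  have l2: "dsub l 2" "l \<subseteq> S" using l unfolding lns_mem by auto
  have lW: "l \<subseteq> W" using l2 S by blast
  have e: "PL l = betw l W 3 - betw l S 3"
  proof (rule set_eqI)
    fix P show "P \<in> PL l \<longleftrightarrow> P \<in> betw l W 3 - betw l S 3"
      unfolding PL_def Diff_iff mem_Collect_eq betw_mem using S(2) by blast
  qed
  have sub: "betw l S 3 \<subseteq> betw l W 3" unfolding subset_iff betw_mem using S(2) by blast
  have c1: "card (betw l W 3) = qq^2 + qq + 1"
    using cntq[OF l2(1) W lW, of 3 "qq^2 + qq + 1"] FF_253[OF q1'] by simp
  have c2: "card (betw l S 3) = qq + 1"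
    using cntq[OF l2(1) S(1) l2(2), of 3 "qq + 1"] FF_243[OF q1'] by simp
  show ?thesis unfolding e using card_Diff_subset[OF finite_betw[OF finS] sub] c1 c2 by simp
qed

lemma line_sum:
  assumes l: "l \<in> lns S" "l \<notin> BS S"
  shows "(\<Sum>Q\<in>pts l. rr Q) = qq^2 + ee l"
proof -
  have l2: "dsub l 2" "l \<subseteq> S" using l(1) unfolding lns_mem by auto
  have fl: "finite l" using l2 by (simp add: dsub_def)
  let ?C = "{L\<in>OL. L \<inter> S \<subseteq> l}"
  have dc1: "(\<Sum>Q\<in>pts l. card {L\<in>OL. Q \<subseteq> L}) = (\<Sum>L\<in>OL. card {Q\<in>pts l. Q \<subseteq> L})"
    by (rule dc_card[OF finite_betw[OF fl] finOL])
  have a1: "card {Q\<in>pts l. Q \<subseteq> L} = (if L \<inter> S \<subseteq> l then 1 else 0)" if L: "L \<in> OL" for L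
  proof -
    have "{Q\<in>pts l. Q \<subseteq> L} = (if L \<inter> S \<subseteq> l then {L \<inter> S} else {})"
    proof -
      have "Q = L \<inter> S \<and> L \<inter> S \<subseteq> l" if "Q \<in> pts l" "Q \<subseteq> L" for Q
      proof -
        have "Q \<in> pts S" using that(1) l2(2) unfolding pts_mem by blast
        hence "Q = L \<inter> S" using out_pt[OF L _ that(2)] by blast
        moreover have "Q \<subseteq> l" using that(1) unfolding pts_mem by blast
        ultimately show ?thesis by blast
      qed
      moreover have "L \<inter> S \<in> pts l" if "L \<inter> S \<subseteq> l" using out_meet[OF L] that unfolding pts_mem by blast
      ultimately show ?thesis by auto
    qed
    thus ?thesis by simp
  qed
  have A: "(\<Sum>Q\<in>pts l. rr Q) = card ?C"
  proof -
    have "(\<Sum>Q\<in>pts l. rr Q) = (\<Sum>L\<in>OL. if L \<inter> S \<subseteq> l then 1 else 0)"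
      using dc1 a1 unfolding rr_def by simp
    also have "\<dots> = card ?C" using card_filter_sum[OF finOL] by simp
    finally show ?thesis .
  qed
  have dc2: "(\<Sum>P\<in>PL l. card {L\<in>B. L \<subseteq> P}) = (\<Sum>L\<in>B. card {P\<in>PL l. L \<subseteq> P})"
    by (rule dc_card[OF finPL finB])
  have b1: "card {P\<in>PL l. L \<subseteq> P} = (if L \<in> OL \<and> L \<inter> S \<subseteq> l then 1 else 0)" if L: "L \<in> B" for L
  proof (cases "L \<in> OL \<and> L \<inter> S \<subseteq> l")
    case True
    hence "{P\<in>PL l. L \<subseteq> P} = {msum L l}" using plane_of[OF l(1)] by blast
    thus ?thesis using True by simp
  next
    case False
    hence e: "{P\<in>PL l. L \<subseteq> P} = {}" using in_PL[OF l _ L] by blast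
    show ?thesis unfolding e using False by simp
  qed
  have Bsum: "(\<Sum>P\<in>PL l. mm P) = card ?C"
  proof -
    have "(\<Sum>P\<in>PL l. mm P) = (\<Sum>L\<in>B. if L \<in> OL \<and> L \<inter> S \<subseteq> l then 1 else 0)"
      using dc2 b1 unfolding mm_def by simp
    also have "\<dots> = card {L\<in>B. L \<in> OL \<and> L \<inter> S \<subseteq> l}" using card_filter_sum[OF finB] by simp
    also have "{L\<in>B. L \<in> OL \<and> L \<inter> S \<subseteq> l} = ?C" unfolding OL_def by blast
    finally show ?thesis .
  qed
  have "(\<Sum>P\<in>PL l. mm P) = (\<Sum>P\<in>PL l. (mm P - 1) + 1)"
  proof (rule sum.cong)
    fix P assume "P \<in> PL l"
    hence "mm P \<ge> 1" using mm_pos unfolding PL_def betw_mem by blast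
    thus "mm P = mm P - 1 + 1" by simp
  qed simp
  also have "\<dots> = ee l + card (PL l)" unfolding ee_def by (simp only: sum.distrib card_eq_sum)
  finally have "(\<Sum>P\<in>PL l. mm P) = ee l + qq^2" using n_PL[OF l(1)] by simp
  thus ?thesis using A Bsum by simp
qed

end


context spread
begin

definition NL :: "(nat \<Rightarrow> 'a) set \<Rightarrow> (nat \<Rightarrow> 'a) set set" where
  "NL P = {l\<in>lns S. P \<subseteq> l \<and> l \<notin> BS S}"

definition RR :: "(nat \<Rightarrow> 'a) set \<Rightarrow> nat" where "RR s = (\<Sum>Q\<in>pts s. rr Q)"

definition eP :: "(nat \<Rightarrow> 'a) set \<Rightarrow> nat" where "eP P = (\<Sum>l\<in>NL P. ee l)"

definition NS :: "(nat \<Rightarrow> 'a) set set" where "NS = {l\<in>lns S. l \<notin> BS S}"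

lemma finNL: "finite (NL P)" using finite_betw[OF finS] by (simp add: NL_def)
lemma finNS: "finite NS" using finite_betw[OF finS] by (simp add: NS_def)
lemma finptsS: "finite (pts S)" by (rule finite_betw[OF finS])

lemma sp_line: "P \<in> pts S \<Longrightarrow> sp P \<in> lns S"
  using sp[of P] sg_line[of "sp P"] unfolding lns_mem sg_mem by blast

lemma NL_eq: assumes P: "P \<in> pts S" shows "NL P = betw P S 2 - {sp P}"
proof (rule set_eqI)
  fix l
  have "l \<in> BS S \<and> P \<subseteq> l \<Longrightarrow> l = sp P" using sp_uniq[OF P] by metis
  moreover have "sp P \<in> BS S" "P \<subseteq> sp P" using sp[OF P] by auto
  ultimately show "l \<in> NL P \<longleftrightarrow> l \<in> betw P S 2 - {sp P}"
    using zero_sub[of l 2] unfolding NL_def Diff_iff mem_Collect_eq betw_mem singleton_iff by blast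
qed

lemma n_NL: assumes P: "P \<in> pts S" shows "card (NL P) = qq^2 + qq"
proof -
  have P1: "dsub P 1" "P \<subseteq> S" using P unfolding pts_mem by auto
  have c: "card (betw P S 2) = qq^2 + qq + 1"
    using cntq[OF P1(1) S(1) P1(2), of 2 "qq^2 + qq + 1"] FF_142[OF q1'] by simp
  have "sp P \<in> betw P S 2" using sp[OF P] sg_line[of "sp P"] unfolding betw_mem sg_mem by blast
  thus ?thesis unfolding NL_eq[OF P] using c finite_betw[OF finS] by simp
qed

lemma two_pts:
  assumes P: "P \<in> pts S" and Q: "Q \<in> pts S" and ne: "P \<noteq> Q"
  shows "msum P Q \<in> lns S" "P \<subseteq> msum P Q" "Q \<subseteq> msum P Q"
    "\<And>l. dsub l 2 \<Longrightarrow> P \<subseteq> l \<Longrightarrow> Q \<subseteq> l \<Longrightarrow> l = msum P Q"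
proof -
  have P1: "dsub P 1" "P \<subseteq> S" using P unfolding pts_mem by auto
  have Q1: "dsub Q 1" "Q \<subseteq> S" using Q unfolding pts_mem by auto
  obtain c where c: "dsub (P \<inter> Q) c" using dsub_Int_ex[OF P1(1) Q1(1)] by blast
  have "c \<le> 1" using dsub_mono[OF c P1(1)] by blast
  moreover have "c \<noteq> 1"
  proof
    assume "c = 1"
    hence "P \<inter> Q = P" "P \<inter> Q = Q" using dsub_eq[of "P \<inter> Q" 1] c P1(1) Q1(1) by auto
    thus False using ne by simp
  qed
  ultimately have c0: "c = 0" by simp
  obtain d where d: "dsub (msum P Q) d" using dsub_msum_ex[OF P1(1) Q1(1)] by blast
  have "d + c = 1 + 1" by (rule dsub_dim_formula[OF P1(1) Q1(1) c d])
  hence "d = 2" using c0 by simp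
  hence d2: "dsub (msum P Q) 2" using d by simp
  show Pm: "P \<subseteq> msum P Q" by (rule msum_sub1[OF dsub_subsp[OF Q1(1)]])
  show Qm: "Q \<subseteq> msum P Q" by (rule msum_sub2[OF dsub_subsp[OF P1(1)]])
  have "msum P Q \<subseteq> S" by (rule msum_dsub_le[OF P1(1) Q1(1) S(1) P1(2) Q1(2)])
  thus "msum P Q \<in> lns S" unfolding lns_mem using d2 by blast
  fix l assume l: "dsub l 2" "P \<subseteq> l" "Q \<subseteq> l"
  have "msum P Q \<subseteq> l" by (rule msum_le[OF dsub_subsp[OF l(1)] l(2,3)])
  thus "l = msum P Q" using dsub_eq[OF d2 l(1)] by simp
qed

lemma cnt_PQ:
  assumes P: "P \<in> pts S" and Q: "Q \<in> pts S"
  shows "card {l\<in>NL P. Q \<subseteq> l} = (if Q = P then qq^2 + qq else if Q \<subseteq> sp P then 0 else 1)"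
proof (cases "Q = P")
  case True
  hence "{l\<in>NL P. Q \<subseteq> l} = NL P" unfolding NL_def by blast
  thus ?thesis using True n_NL[OF P] by simp
next
  case False
  note tp = two_pts[OF P Q False[symmetric]]
  show ?thesis
  proof (cases "Q \<subseteq> sp P")
    case True
    have spl: "sp P = msum P Q" using tp(4)[of "sp P"] sp[OF P] sg_line True by blast
    have e: "{l\<in>NL P. Q \<subseteq> l} = {}"
    proof (rule ccontr)
      assume "{l\<in>NL P. Q \<subseteq> l} \<noteq> {}"
      then obtain l where l: "l \<in> NL P" "Q \<subseteq> l" by blast
      have "dsub l 2" "P \<subseteq> l" "l \<notin> BS S" using l unfolding NL_def lns_mem by auto
      hence "l = msum P Q" "l \<notin> BS S" using tp(4) l(2) by auto
      thus False using spl sp[OF P] by simp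
    qed
    show ?thesis unfolding e using True False by simp
  next
    case nQ: False
    have "msum P Q \<notin> BS S"
    proof
      assume "msum P Q \<in> BS S"
      hence "sp P = msum P Q" using sp_uniq[OF P _ tp(2)] by blast
      thus False using nQ tp(3) by simp
    qed
    hence mem: "msum P Q \<in> NL P" unfolding NL_def using tp(1,2) by blast
    have "{l\<in>NL P. Q \<subseteq> l} = {msum P Q}"
    proof
      show "{l\<in>NL P. Q \<subseteq> l} \<subseteq> {msum P Q}"
      proof
        fix l assume "l \<in> {l\<in>NL P. Q \<subseteq> l}"
        hence "dsub l 2" "P \<subseteq> l" "Q \<subseteq> l" unfolding NL_def lns_mem by auto
        thus "l \<in> {msum P Q}" using tp(4) by blast
      qed
      show "{msum P Q} \<subseteq> {l\<in>NL P. Q \<subseteq> l}" using mem tp(3) by blast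
    qed
    hence e: "card {l\<in>NL P. Q \<subseteq> l} = 1" by simp
    show ?thesis unfolding e using nQ False by simp
  qed
qed

lemma pts_sub: assumes "l \<subseteq> S" shows "pts l = {Q\<in>pts S. Q \<subseteq> l}"
  using assms unfolding betw_def by blast

lemma F8:
  assumes P: "P \<in> pts S"
  shows "(\<Sum>l\<in>NL P. \<Sum>Q\<in>pts l. rr Q) + RR (sp P) = (qq^2 + qq) * rr P + card OL"
proof -
  have "(\<Sum>l\<in>NL P. \<Sum>Q\<in>pts l. rr Q) = (\<Sum>l\<in>NL P. \<Sum>Q\<in>{Q\<in>pts S. Q \<subseteq> l}. rr Q)"
  proof (rule sum.cong)
    fix l assume "l \<in> NL P"
    hence "l \<subseteq> S" unfolding NL_def lns_mem by blast
    show "(\<Sum>Q\<in>pts l. rr Q) = (\<Sum>Q\<in>{Q\<in>pts S. Q \<subseteq> l}. rr Q)" unfolding pts_sub[OF \<open>l \<subseteq> S\<close>] ..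
  qed simp
  also have "\<dots> = (\<Sum>Q\<in>pts S. \<Sum>l\<in>{l\<in>NL P. Q \<subseteq> l}. rr Q)"
    by (rule dc_sum[OF finNL finptsS])
  also have "\<dots> = (\<Sum>Q\<in>pts S. card {l\<in>NL P. Q \<subseteq> l} * rr Q)" by simp
  finally have e1: "(\<Sum>l\<in>NL P. \<Sum>Q\<in>pts l. rr Q) = (\<Sum>Q\<in>pts S. card {l\<in>NL P. Q \<subseteq> l} * rr Q)" .
  have spS: "sp P \<subseteq> S" using sp[OF P] unfolding sg_mem by blast
  have e2: "RR (sp P) = (\<Sum>Q\<in>pts S. if Q \<subseteq> sp P then rr Q else 0)"
    unfolding RR_def pts_sub[OF spS] using sum.inter_filter[OF finptsS] by simp
  have "(\<Sum>Q\<in>pts S. card {l\<in>NL P. Q \<subseteq> l} * rr Q) + (\<Sum>Q\<in>pts S. if Q \<subseteq> sp P then rr Q else 0)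
      = (\<Sum>Q\<in>pts S. card {l\<in>NL P. Q \<subseteq> l} * rr Q + (if Q \<subseteq> sp P then rr Q else 0))"
    by (simp only: sum.distrib)
  also have "\<dots> = (\<Sum>Q\<in>pts S. rr Q + (if Q = P then (qq^2 + qq) * rr Q else 0))"
  proof (rule sum.cong)
    fix Q assume Q: "Q \<in> pts S"
    show "card {l\<in>NL P. Q \<subseteq> l} * rr Q + (if Q \<subseteq> sp P then rr Q else 0)
        = rr Q + (if Q = P then (qq^2 + qq) * rr Q else 0)"
    proof (cases "Q = P")
      case True
      thus ?thesis unfolding cnt_PQ[OF P Q] using sp(2)[OF P] by (simp add: algebra_simps)
    next
      case False
      thus ?thesis unfolding cnt_PQ[OF P Q] by simp
    qed
  qed simp
  also have "\<dots> = card OL + (qq^2 + qq) * rr P"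
    unfolding sum.distrib T_sum using P finptsS by (simp add: sum.delta)
  finally show ?thesis using e1 e2 by simp
qed

lemma F9:
  assumes P: "P \<in> pts S"
  shows "(qq^2 + qq) * qq^2 + eP P + RR (sp P) = (qq^2 + qq) * rr P + card OL"
proof -
  have "(\<Sum>l\<in>NL P. \<Sum>Q\<in>pts l. rr Q) = (\<Sum>l\<in>NL P. qq^2 + ee l)"
  proof (rule sum.cong)
    fix l assume "l \<in> NL P"
    hence "l \<in> lns S" "l \<notin> BS S" unfolding NL_def by auto
    thus "(\<Sum>Q\<in>pts l. rr Q) = qq^2 + ee l" by (rule line_sum)
  qed simp
  also have "\<dots> = (qq^2 + qq) * qq^2 + eP P"
    unfolding sum.distrib eP_def using n_NL[OF P] by simp
  finally show ?thesis using F8[OF P] by simp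
qed

lemma F10: "card NS * qq^2 + (\<Sum>l\<in>NS. ee l) = (qq^2 + qq) * card OL"
proof -
  have "(\<Sum>l\<in>NS. \<Sum>Q\<in>pts l. rr Q) = (\<Sum>l\<in>NS. qq^2 + ee l)"
  proof (rule sum.cong)
    fix l assume "l \<in> NS"
    hence "l \<in> lns S" "l \<notin> BS S" unfolding NS_def by auto
    thus "(\<Sum>Q\<in>pts l. rr Q) = qq^2 + ee l" by (rule line_sum)
  qed simp
  hence A: "(\<Sum>l\<in>NS. \<Sum>Q\<in>pts l. rr Q) = card NS * qq^2 + (\<Sum>l\<in>NS. ee l)"
    by (simp add: sum.distrib)
  have "(\<Sum>l\<in>NS. \<Sum>Q\<in>pts l. rr Q) = (\<Sum>l\<in>NS. \<Sum>Q\<in>{Q\<in>pts S. Q \<subseteq> l}. rr Q)"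
  proof (rule sum.cong)
    fix l assume "l \<in> NS"
    hence "l \<subseteq> S" unfolding NS_def lns_mem by blast
    show "(\<Sum>Q\<in>pts l. rr Q) = (\<Sum>Q\<in>{Q\<in>pts S. Q \<subseteq> l}. rr Q)" unfolding pts_sub[OF \<open>l \<subseteq> S\<close>] ..
  qed simp
  also have "\<dots> = (\<Sum>Q\<in>pts S. \<Sum>l\<in>{l\<in>NS. Q \<subseteq> l}. rr Q)"
    by (rule dc_sum[OF finNS finptsS])
  also have "\<dots> = (\<Sum>Q\<in>pts S. (qq^2 + qq) * rr Q)"
  proof (rule sum.cong)
    fix Q assume Q: "Q \<in> pts S"
    have "{l\<in>NS. Q \<subseteq> l} = NL Q" unfolding NS_def NL_def by blast
    thus "(\<Sum>l\<in>{l\<in>NS. Q \<subseteq> l}. rr Q) = (qq^2 + qq) * rr Q" using n_NL[OF Q] by simp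
  qed simp
  also have "\<dots> = (qq^2 + qq) * card OL" unfolding T_sum by (simp add: sum_distrib_left)
  finally show ?thesis using A by simp
qed

lemma n_NS: "card NS = (qq^2 + 1) * (qq^2 + qq)"
proof -
  have e: "NS = lns S - BS S" unfolding NS_def by blast
  have sub: "BS S \<subseteq> lns S" unfolding subset_iff lns_mem using sg_line sg_mem by blast
  have c: "card (lns S) = (qq^2 + 1) * (qq^2 + qq + 1)"
    using cntq[OF dsub_zero S(1) zero_sub[OF S(1)], of 2 "(qq^2 + 1) * (qq^2 + qq + 1)"] FF_042[OF q1'] by simp
  have "card NS = (qq^2 + 1) * (qq^2 + qq + 1) - (qq^2 + 1)"
    unfolding e using card_Diff_subset[OF finite_subset[OF sub finite_betw[OF finS]] sub] c Sc by simp
  also have "\<dots> = (qq^2 + 1) * (qq^2 + qq)" by (simp add: algebra_simps)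
  finally show ?thesis .
qed

lemma F11: "card OL = (\<Sum>s\<in>BS S. RR s)"
proof -
  have fBS: "finite (BS S)" using finB by (simp add: BS_def)
  have "(\<Sum>s\<in>BS S. RR s) = (\<Sum>s\<in>BS S. \<Sum>Q\<in>{Q\<in>pts S. Q \<subseteq> s}. rr Q)"
  proof (rule sum.cong)
    fix s assume "s \<in> BS S"
    hence "s \<subseteq> S" unfolding sg_mem by blast
    show "RR s = (\<Sum>Q\<in>{Q\<in>pts S. Q \<subseteq> s}. rr Q)" unfolding RR_def pts_sub[OF \<open>s \<subseteq> S\<close>] by (rule refl)
  qed simp
  also have "\<dots> = (\<Sum>Q\<in>pts S. \<Sum>s\<in>{s\<in>BS S. Q \<subseteq> s}. rr Q)"
    by (rule dc_sum[OF fBS finptsS])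
  also have "\<dots> = (\<Sum>Q\<in>pts S. rr Q)"
  proof (rule sum.cong)
    fix Q assume Q: "Q \<in> pts S"
    have "{s\<in>BS S. Q \<subseteq> s} = {sp Q}" using sp[OF Q] sp_uniq[OF Q] by blast
    thus "(\<Sum>s\<in>{s\<in>BS S. Q \<subseteq> s}. rr Q) = rr Q" by simp
  qed simp
  finally show ?thesis using T_sum by simp
qed

definition es :: "(nat \<Rightarrow> 'a) set \<Rightarrow> nat" where "es s = (\<Sum>P\<in>pts s. eP P)"

lemma F12:
  assumes s: "s \<in> BS S"
  shows "(qq + 1) * ((qq^2 + qq) * qq^2) + es s + (qq + 1) * RR s = (qq^2 + qq) * RR s + (qq + 1) * card OL"
proof -
  have s2: "dsub s 2" "s \<subseteq> S" using s sg_line unfolding sg_mem by auto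
  have np: "card (pts s) = qq + 1" by (rule n_pts_line[OF s2(1)])
  have "(\<Sum>P\<in>pts s. (qq^2 + qq) * qq^2 + eP P + RR (sp P)) = (\<Sum>P\<in>pts s. (qq^2 + qq) * rr P + card OL)"
  proof (rule sum.cong)
    fix P assume P: "P \<in> pts s"
    hence "P \<in> pts S" using s2(2) unfolding pts_mem by blast
    thus "(qq^2 + qq) * qq^2 + eP P + RR (sp P) = (qq^2 + qq) * rr P + card OL" by (rule F9)
  qed simp
  moreover have "(\<Sum>P\<in>pts s. (qq^2 + qq) * qq^2 + eP P + RR (sp P)) = (qq + 1) * ((qq^2 + qq) * qq^2) + es s + (qq + 1) * RR s"
  proof -
    have "(\<Sum>P\<in>pts s. RR (sp P)) = (\<Sum>P\<in>pts s. RR s)"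
    proof (rule sum.cong)
      fix P assume P: "P \<in> pts s"
      hence "P \<in> pts S" "P \<subseteq> s" using s2(2) unfolding pts_mem by auto
      thus "RR (sp P) = RR s" using sp_uniq s by simp
    qed simp
    thus ?thesis unfolding sum.distrib es_def using np by simp
  qed
  moreover have "(\<Sum>P\<in>pts s. (qq^2 + qq) * rr P + card OL) = (qq^2 + qq) * RR s + (qq + 1) * card OL"
    unfolding sum.distrib RR_def using np by (simp add: sum_distrib_left)
  ultimately show ?thesis by simp
qed

lemma F13:
  assumes l: "l \<in> NS" "ee l > 0" and P: "P \<in> pts l"
  shows "es (sp P) > 0"
proof -
  have l2: "l \<subseteq> S" using l(1) unfolding NS_def lns_mem by blast
  have PS: "P \<in> pts S" using P l2 unfolding pts_mem by blast
  have "l \<in> NL P" using l(1) P unfolding NS_def NL_def pts_mem by blast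
  hence "ee l \<le> eP P" unfolding eP_def by (rule member_le_sum[OF _ _ finNL]) simp
  moreover have "P \<in> pts (sp P)" using sp[OF PS] PS unfolding pts_mem by blast
  hence "eP P \<le> es (sp P)" unfolding es_def
    by (rule member_le_sum[OF _ _ finite_betw]) (use sp[OF PS] sg_line in \<open>simp_all add: dsub_def\<close>)
  ultimately show ?thesis using l(2) by simp
qed

lemma F14:
  assumes l: "l \<in> NS" shows "inj_on sp (pts l)"
proof (rule inj_onI)
  fix P Q assume P: "P \<in> pts l" and Q: "Q \<in> pts l" and e: "sp P = sp Q"
  show "P = Q"
  proof (rule ccontr)
    assume ne: "P \<noteq> Q"
    have l2: "dsub l 2" "l \<subseteq> S" "l \<notin> BS S" using l unfolding NS_def lns_mem by auto
    have PS: "P \<in> pts S" and QS: "Q \<in> pts S" using P Q l2(2) unfolding pts_mem by auto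
    note tp = two_pts[OF PS QS ne]
    have "l = msum P Q" using tp(4)[OF l2(1)] P Q unfolding pts_mem by blast
    moreover have "sp P = msum P Q" using tp(4)[of "sp P"] sp[OF PS] sp[OF QS] e sg_line by metis
    ultimately show False using sp[OF PS] l2(3) by simp
  qed
qed

end


lemma arL1:
  fixes q t T es R :: int
  assumes q: "q \<ge> 2" and t: "0 \<le> t" "t \<le> q - 1" and T: "T = q^4 + q^2 + t" and es: "es \<ge> 0"
    and eq: "(q+1)*((q^2+q)*q^2) + es + (q+1)*R = (q^2+q)*R + (q+1)*T" and R: "R \<le> q^2 - 1"
  shows "es = 0 \<and> t = q - 1 \<and> R = q^2 - 1"
proof -
  have e1: "(q^2-1)*R = (q+1)*(q^3-q^2-t) + es" using eq T by algebra
  have "q^2 - 1 \<ge> 0" using q by (simp add: power2_eq_square)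
  hence "(q^2-1)*R \<le> (q^2-1)*(q^2-1)" by (rule mult_left_mono[OF R])
  moreover have "(q^2-1)*(q^2-1) = (q+1)*(q^3-q^2-t) + (q+1)*(t - q + 1)" by algebra
  ultimately have "(q+1)*(q-1-t) + es \<le> 0" using e1 by (simp add: algebra_simps)
  moreover have "(q+1)*(q-1-t) \<ge> 0" using q t by simp
  ultimately have "es = 0" "(q+1)*(q-1-t) = 0" using es by linarith+
  moreover have "q + 1 \<noteq> 0" using q by simp
  ultimately have z: "es = 0" "t = q - 1" by simp_all
  have "(q^2-1)*R = (q^2-1)*(q^2-1)" using e1 z by algebra
  moreover have "q^2 - 1 \<noteq> 0" using q by (simp add: power2_eq_square) (smt (verit) mult_le_cancel_left1)
  ultimately have "R = q^2 - 1" by simp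
  thus ?thesis using z by simp
qed

lemma arL2:
  fixes q t T e R r :: int
  assumes q: "q \<ge> 2" and t: "0 \<le> t" "t \<le> q - 1" and T: "T = q^4 + q^2 + t" and e: "e \<ge> 0"
    and R: "R \<ge> q^2" and eq: "(q^2+q)*q^2 + e + R = (q^2+q)*r + T"
  shows "e + R \<ge> 2*q^2 + t"
proof -
  have pos: "q^2 + q > 0" using q by (smt (verit) zero_less_power)
  have "(q^2+q)*r = q^3 + e + (R - q^2) - t" using eq T by algebra
  hence "(q^2+q)*r \<ge> q^3 - t" using e R by linarith
  moreover have "(q^2+q)*(q-1) = q^3 - q" by algebra
  ultimately have "(q^2+q)*(q-1) < (q^2+q)*r" using t by linarith
  hence "q - 1 < r" using pos by (simp add: mult_less_cancel_left_pos)
  hence "q \<le> r" by simp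
  hence "(q^2+q)*q \<le> (q^2+q)*r" using pos by (simp add: mult_le_cancel_left_pos)
  moreover have "e + R = (q^2+q)*r + T - (q^2+q)*q^2" using eq by simp
  moreover have "(q^2+q)*q + (q^4 + q^2 + t) - (q^2+q)*q^2 = 2*q^2 + t" by algebra
  ultimately show ?thesis using T by linarith
qed

lemma arL3:
  fixes q t T es R :: int
  assumes q: "q \<ge> 2" and T: "T = q^4 + q^2 + t"
    and eq: "(q+1)*((q^2+q)*q^2) + es + (q+1)*R = (q^2+q)*R + (q+1)*T"
    and ge: "es + (q+1)*R \<ge> (q+1)*(2*q^2+t)"
  shows "R \<ge> q^2 + q"
proof -
  have pos: "q^2 + q > 0" using q by (smt (verit) zero_less_power)
  have "(q^2+q)*R = es + (q+1)*R - (q+1)*(q^2 + t - q^3)" using eq T by algebra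
  moreover have "(q+1)*(2*q^2+t) - (q+1)*(q^2 + t - q^3) = (q^2+q)*(q^2+q)" by algebra
  ultimately have "(q^2+q)*(q^2+q) \<le> (q^2+q)*R" using ge by linarith
  thus ?thesis using pos by (simp add: mult_le_cancel_left_pos)
qed

lemma arL4:
  fixes q h :: int
  assumes q: "q \<ge> 2" and le: "h*(q^2+q) + (q^2+1-h)*(q^2-1) \<le> q^4 + q^2 + q - 1"
  shows "h \<le> q"
proof -
  have "h*(q^2+q) + (q^2+1-h)*(q^2-1) = q^4 - 1 + h*(q+1)" by algebra
  hence "h*(q+1) \<le> q*(q+1)" using le by (simp add: algebra_simps power2_eq_square)
  thus ?thesis using q by (simp add: mult_le_cancel_right)
qed


context spread
begin

lemma B_split: "card B = card (BS S) + card OL"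
proof -
  have "B = BS S \<union> OL" "BS S \<inter> OL = {}" unfolding BS_def OL_def by blast+
  moreover have "finite (BS S)" "finite OL" using finB finOL by (simp_all add: BS_def)
  ultimately show ?thesis using card_Un_disjoint by metis
qed

lemma F12i:
  assumes s: "s \<in> BS S"
  shows "(int qq+1)*((int qq^2+int qq)*int qq^2) + int (es s) + (int qq+1)*int (RR s)
       = (int qq^2+int qq)*int (RR s) + (int qq+1)*int (card OL)"
proof -
  have "int ((qq + 1) * ((qq^2 + qq) * qq^2) + es s + (qq + 1) * RR s) = int ((qq^2 + qq) * RR s + (qq + 1) * card OL)"
    using F12[OF s] by simp
  thus ?thesis by (simp only: of_nat_add of_nat_mult of_nat_power of_nat_1)
qed

lemma F9i:
  assumes P: "P \<in> pts S"
  shows "(int qq^2+int qq)*int qq^2 + int (eP P) + int (RR (sp P)) = (int qq^2+int qq)*int (rr P) + int (card OL)"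
proof -
  have "int ((qq^2 + qq) * qq^2 + eP P + RR (sp P)) = int ((qq^2 + qq) * rr P + card OL)"
    using F9[OF P] by simp
  thus ?thesis by (simp only: of_nat_add of_nat_mult of_nat_power)
qed

theorem spread_bound: "card B \<ge> qq^4 + 2*qq^2 + qq + 1"
proof (rule ccontr)
  assume "\<not> ?thesis"
  hence b: "card B \<le> qq^4 + 2*qq^2 + qq" by simp
  define T where "T = card OL"
  have q2: "qq \<ge> 2" using q1' by simp
  have Tle: "T + 1 \<le> qq^4 + qq^2 + qq" using b B_split Sc unfolding T_def by simp
  have F10': "(qq^2 + qq) * ((qq^2 + 1) * qq^2) + (\<Sum>l\<in>NS. ee l) = (qq^2 + qq) * T"
    using F10 n_NS unfolding T_def by (simp add: algebra_simps)
  hence "(qq^2 + qq) * ((qq^2 + 1) * qq^2) \<le> (qq^2 + qq) * T" by linarith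
  hence Tge: "(qq^2 + 1) * qq^2 \<le> T" using q2 by (simp add: mult_le_cancel1)
  define t where "t = T - (qq^4 + qq^2)"
  have Tt: "T = qq^4 + qq^2 + t" using Tge unfolding t_def by (simp add: algebra_simps power2_eq_square power4_eq_xxxx)
  have tle: "t + 1 \<le> qq" using Tle Tt by simp
  have EE: "(\<Sum>l\<in>NS. ee l) = (qq^2 + qq) * t"
  proof -
    have "(qq^2 + qq) * ((qq^2 + 1) * qq^2) + (\<Sum>l\<in>NS. ee l) = (qq^2 + qq) * ((qq^2 + 1) * qq^2) + (qq^2 + qq) * t"
      using F10' Tt by (simp add: algebra_simps power2_eq_square power4_eq_xxxx)
    thus ?thesis by simp
  qed
  let ?q = "int qq" and ?t = "int t" and ?T = "int T"
  have qi: "?q \<ge> 2" using q2 by simp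
  have ti: "0 \<le> ?t" "?t \<le> ?q - 1" using tle by simp_all
  have Ti: "?T = ?q^4 + ?q^2 + ?t" using Tt by simp
  have light: "es s = 0 \<and> t = qq - 1 \<and> int (RR s) = ?q^2 - 1" if s: "s \<in> BS S" "RR s < qq^2" for s
  proof -
    have "int (RR s) \<le> ?q^2 - 1" using s(2) by (simp add: of_nat_less_iff[symmetric])
    hence "int (es s) = 0 \<and> ?t = ?q - 1 \<and> int (RR s) = ?q^2 - 1"
      using arL1[OF qi ti Ti, of "int (es s)" "int (RR s)"] F12i[OF s(1)] unfolding T_def by simp
    thus ?thesis using q2 by auto
  qed
  have heavy: "RR s \<ge> qq^2 + qq" if s: "s \<in> BS S" "RR s \<ge> qq^2" for s
  proof -
    have s2: "dsub s 2" "s \<subseteq> S" using s(1) sg_line unfolding sg_mem by auto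
    have pt: "eP P + RR s \<ge> 2*qq^2 + t" if P: "P \<in> pts s" for P
    proof -
      have PS: "P \<in> pts S" using P s2(2) unfolding pts_mem by blast
      have sp: "sp P = s" using sp_uniq[OF PS s(1)] P unfolding pts_mem by blast
      have "int (RR s) \<ge> ?q^2" using s(2) by (simp add: of_nat_le_iff[symmetric])
      hence "int (eP P) + int (RR s) \<ge> 2*?q^2 + ?t"
        using arL2[OF qi ti Ti, of "int (eP P)" "int (RR s)" "int (rr P)"] F9i[OF PS] sp unfolding T_def by simp
      hence "int (2*qq^2 + t) \<le> int (eP P + RR s)" by simp
      thus ?thesis by (simp only: of_nat_le_iff)
    qed
    have "(\<Sum>P\<in>pts s. eP P + RR s) \<ge> (\<Sum>P\<in>pts s. 2*qq^2 + t)" by (rule sum_mono) (rule pt)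
    hence "es s + (qq + 1) * RR s \<ge> (qq + 1) * (2*qq^2 + t)"
      unfolding sum.distrib es_def using n_pts_line[OF s2(1)] by (simp add: algebra_simps)
    hence "int ((qq + 1) * (2*qq^2 + t)) \<le> int (es s + (qq + 1) * RR s)" by (simp only: of_nat_le_iff)
    hence "int (es s) + (?q + 1) * int (RR s) \<ge> (?q + 1) * (2*?q^2 + ?t)" by (simp add: algebra_simps)
    hence "int (RR s) \<ge> ?q^2 + ?q" using arL3[OF qi Ti, of "int (es s)" "int (RR s)"] F12i[OF s(1)] unfolding T_def by simp
    hence "int (qq^2 + qq) \<le> int (RR s)" by simp
    thus ?thesis by (simp only: of_nat_le_iff)
  qed
  define H where "H = {s\<in>BS S. RR s \<ge> qq^2}"
  have fBS: "finite (BS S)" using finB by (simp add: BS_def)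
  have TR: "T = (\<Sum>s\<in>BS S. RR s)" using F11 unfolding T_def .
  show False
  proof (cases "H = BS S")
    case True
    have "(\<Sum>s\<in>BS S. RR s) \<ge> (\<Sum>s\<in>BS S. qq^2 + qq)"
    proof (rule sum_mono)
      fix s assume "s \<in> BS S"
      hence "s \<in> H" using True by simp
      thus "RR s \<ge> qq^2 + qq" using heavy unfolding H_def by blast
    qed
    hence "T \<ge> (qq^2 + 1) * (qq^2 + qq)" using TR Sc by simp
    moreover have "(qq^2 + 1) * (qq^2 + qq) = qq^4 + qq^2 + qq + qq^3"
      by (simp add: algebra_simps power2_eq_square power3_eq_cube power4_eq_xxxx)
    ultimately show False using Tle by simp
  next
    case False
    have "\<exists>s0\<in>BS S. s0 \<notin> H" using False unfolding H_def by blast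
    then obtain s0 where s0': "s0 \<in> BS S" "s0 \<notin> H" by blast
    have s0: "s0 \<in> BS S" "RR s0 < qq^2" using s0' unfolding H_def by auto
    have tq: "t = qq - 1" using light[OF s0] by simp
    have HS: "H \<subseteq> BS S" unfolding H_def by blast
    have fH: "finite H" using finite_subset[OF HS fBS] .
    have cH: "card H + card (BS S - H) = qq^2 + 1" using card_Diff_subset[OF fH HS] card_mono[OF fBS HS] Sc by simp
    have A: "int T = (\<Sum>s\<in>H. int (RR s)) + (\<Sum>s\<in>BS S - H. int (RR s))"
      unfolding TR of_nat_sum using sum.subset_diff[OF HS fBS, of "\<lambda>s. int (RR s)"] by simp
    have "(\<Sum>s\<in>H. int (RR s)) \<ge> (\<Sum>s\<in>H. ?q^2 + ?q)"
    proof (rule sum_mono)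
      fix s assume "s \<in> H"
      hence "RR s \<ge> qq^2 + qq" using heavy unfolding H_def by blast
      hence "int (RR s) \<ge> int (qq^2 + qq)" by (simp only: of_nat_le_iff)
      thus "int (RR s) \<ge> ?q^2 + ?q" by simp
    qed
    hence B: "(\<Sum>s\<in>H. int (RR s)) \<ge> int (card H) * (?q^2 + ?q)" by simp
    have "(\<Sum>s\<in>BS S - H. int (RR s)) = (\<Sum>s\<in>BS S - H. ?q^2 - 1)"
    proof (rule sum.cong)
      fix s assume "s \<in> BS S - H"
      hence "s \<in> BS S" "RR s < qq^2" unfolding H_def by auto
      thus "int (RR s) = ?q^2 - 1" using light by blast
    qed simp
    hence C: "(\<Sum>s\<in>BS S - H. int (RR s)) = int (card (BS S - H)) * (?q^2 - 1)" by simp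
    have "int T \<ge> int (card H) * (?q^2 + ?q) + int (card (BS S - H)) * (?q^2 - 1)"
      using A B C by linarith
    moreover have D: "int (card (BS S - H)) = ?q^2 + 1 - int (card H)" using arg_cong[OF cH, of int] by simp
    moreover have tqi: "?t = ?q - 1" using tq q2 by (simp add: of_nat_diff)
    ultimately have X: "int (card H) * (?q^2 + ?q) + int (card (BS S - H)) * (?q^2 - 1) \<le> ?q^4 + ?q^2 + ?q - 1"
      using Ti by linarith
    have "int (card H) * (?q^2 + ?q) + (?q^2 + 1 - int (card H)) * (?q^2 - 1) \<le> ?q^4 + ?q^2 + ?q - 1"
      using X unfolding D by assumption
    hence hq: "int (card H) \<le> ?q" by (rule arL4[OF qi])
    have "(\<Sum>l\<in>NS. ee l) > 0" using EE tq q2 by simp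
    hence "\<exists>l\<in>NS. ee l > 0"
    proof (rule contrapos_pp)
      assume "\<not> (\<exists>l\<in>NS. ee l > 0)"
      hence "\<forall>l\<in>NS. ee l = 0" by simp
      hence "(\<Sum>l\<in>NS. ee l) = 0" by simp
      thus "\<not> (\<Sum>l\<in>NS. ee l) > 0" by simp
    qed
    then obtain l where l: "l \<in> NS" "ee l > 0" by blast
    have l2: "dsub l 2" using l(1) unfolding NS_def lns_mem by blast
    have "sp ` pts l \<subseteq> H"
    proof
      fix x assume "x \<in> sp ` pts l"
      then obtain P where P: "P \<in> pts l" "x = sp P" by blast
      have PS: "P \<in> pts S" using P(1) l(1) unfolding NS_def lns_mem pts_mem by blast
      have pos: "es (sp P) > 0" by (rule F13[OF l P(1)])
      have spS: "sp P \<in> BS S" using sp[OF PS] by blast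
      have "RR (sp P) \<ge> qq^2"
      proof (rule ccontr)
        assume "\<not> ?thesis"
        hence "es (sp P) = 0" using light[OF spS] by simp
        thus False using pos by simp
      qed
      thus "x \<in> H" using P(2) spS unfolding H_def by blast
    qed
    hence "card (pts l) \<le> card H" using card_inj_on_le[OF F14[OF l(1)] _ fH] by blast
    hence "qq + 1 \<le> card H" using n_pts_line[OF l2] by simp
    thus False using hq by simp
  qed
qed

end


lemma pg4_bound:
  fixes W :: "(nat \<Rightarrow> 'a::{finite,field}) set"
  assumes W: "dsub W 5"
    and B: "\<And>L. L \<in> B \<Longrightarrow> dsub L 2 \<and> L \<subseteq> W"
    and blk: "\<And>P. dsub P 3 \<Longrightarrow> P \<subseteq> W \<Longrightarrow> \<exists>L\<in>B. L \<subseteq> P"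
  shows "card B \<ge> card (UNIV::'a set)^4 + 2*card (UNIV::'a set)^2 + card (UNIV::'a set) + 1"
proof -
  let ?q = "card (UNIV::'a set)"
  interpret pg4 W B "card (UNIV::'a set)"
    by unfold_locales (use W B blk in auto)
  show ?thesis
  proof (cases "\<forall>S\<in>betw {0} W 4. card (BS S) \<ge> ?q^2 + 2")
    case True
    thus ?thesis using case_nonspread by blast
  next
    case False
    then obtain S where S: "S \<in> betw {0} W 4" "card (BS S) < ?q^2 + 2" by auto
    have S4: "dsub S 4" "S \<subseteq> W" using S(1) unfolding betw_mem by auto
    have "card (BS S) \<ge> ?q^2 + 1" by (rule solid_ge[OF S4])
    hence c: "card (BS S) = ?q^2 + 1" using S(2) by simp
    interpret spread W B "card (UNIV::'a set)" S
      by unfold_locales (use S4 c in auto)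
    show ?thesis using spread_bound by simp
  qed
qed

lemma avg_bound:
  fixes V :: "(nat \<Rightarrow> 'a::{finite,field}) set"
  assumes V: "dsub V N" and N: "5 \<le> N"
    and B: "\<And>L. L \<in> B \<Longrightarrow> dsub L 2 \<and> L \<subseteq> V"
    and blk: "\<And>P. dsub P 3 \<Longrightarrow> P \<subseteq> V \<Longrightarrow> \<exists>L\<in>B. L \<subseteq> P"
  shows "real (card B) \<ge> real (card (UNIV::'a set)^4 + 2*card (UNIV::'a set)^2 + card (UNIV::'a set) + 1)
     * ((real (card (UNIV::'a set)) ^ N - 1) * (real (card (UNIV::'a set)) ^ N - real (card (UNIV::'a set)))
        / ((real (card (UNIV::'a set)) ^ 5 - 1) * (real (card (UNIV::'a set)) ^ 5 - real (card (UNIV::'a set)))))"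
proof -
  let ?q = "card (UNIV::'a set)"
  let ?c = "?q^4 + 2*?q^2 + ?q + 1"
  let ?Ws = "betw {0} V 5"
  have finV: "finite V" using V by (simp add: dsub_def)
  have finB: "finite B" by (rule finite_subset[of B "Pow V"]) (use B finV in auto)
  have dc: "(\<Sum>L\<in>B. card {W\<in>?Ws. L \<subseteq> W}) = (\<Sum>W\<in>?Ws. card {L\<in>B. L \<subseteq> W})"
    by (rule dc_card[OF finB finite_betw[OF finV]])
  have l: "real (card {W\<in>?Ws. L \<subseteq> W}) = FF ?q 2 N 5" if "L \<in> B" for L
  proof -
    have L: "dsub L 2" "L \<subseteq> V" using B[OF that] by auto
    have "{W\<in>?Ws. L \<subseteq> W} = betw L V 5" using zero_sub[OF L(1)] unfolding betw_def by blast
    thus ?thesis using count_betw[OF L(1) V L(2)] N by simp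
  qed
  have r: "card {L\<in>B. L \<subseteq> W} \<ge> ?c" if "W \<in> ?Ws" for W
  proof -
    have W: "dsub W 5" "W \<subseteq> V" using that unfolding betw_mem by auto
    show ?thesis
    proof (rule pg4_bound[OF W(1)])
      fix L assume "L \<in> {L\<in>B. L \<subseteq> W}"
      thus "dsub L 2 \<and> L \<subseteq> W" using B by blast
    next
      fix P assume P: "dsub P 3" "P \<subseteq> W"
      then obtain L where "L \<in> B" "L \<subseteq> P" using blk[OF P(1)] W(2) by blast
      thus "\<exists>L\<in>{L\<in>B. L \<subseteq> W}. L \<subseteq> P" using P(2) by blast
    qed
  qed
  have nW: "real (card ?Ws) = FF ?q 0 N 5" using count_betw[OF dsub_zero V zero_sub[OF V]] N by simp
  have "real (card B) * FF ?q 2 N 5 = (\<Sum>L\<in>B. real (card {W\<in>?Ws. L \<subseteq> W}))" using l by simp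
  also have "\<dots> = (\<Sum>W\<in>?Ws. real (card {L\<in>B. L \<subseteq> W}))" using arg_cong[OF dc, of real] by simp
  also have "\<dots> \<ge> (\<Sum>W\<in>?Ws. real ?c)"
    by (rule sum_mono) (use r in \<open>simp only: of_nat_le_iff\<close>)
  also have "(\<Sum>W\<in>?Ws. real ?c) = real ?c * FF ?q 0 N 5" unfolding sum_constant nW by (rule mult.commute)
  finally have "real (card B) * FF ?q 2 N 5 \<ge> real ?c * FF ?q 0 N 5" .
  also have "real ?c * FF ?q 0 N 5 = (real ?c * ((real ?q ^ N - 1) * (real ?q ^ N - real ?q) / ((real ?q ^ 5 - 1) * (real ?q ^ 5 - real ?q)))) * FF ?q 2 N 5"
    unfolding FF_ratio[OF q_gt1 N] by (simp only: ac_simps)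
  finally have ineq: "(real ?c * ((real ?q ^ N - 1) * (real ?q ^ N - real ?q) / ((real ?q ^ 5 - 1) * (real ?q ^ 5 - real ?q)))) * FF ?q 2 N 5
      \<le> real (card B) * FF ?q 2 N 5" .
  have "GG ?q N 5 > 0" "GG ?q 5 2 > 0" "GG ?q N 2 > 0" "GG ?q 5 5 > 0"
    using GG_pos[OF q_gt1, of 5 N] GG_pos[OF q_gt1, of 2 5] GG_pos[OF q_gt1, of 2 N] GG_pos[OF q_gt1, of 5 5] N by simp_all
  hence "FF ?q 2 N 5 > 0" unfolding FF_def by (simp add: divide_pos_pos)
  with ineq show ?thesis by (rule mult_right_le_imp_le)
qed


definition indep :: "(nat \<Rightarrow> nat \<Rightarrow> 'a::field) \<Rightarrow> nat \<Rightarrow> bool" where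
  "indep v k \<longleftrightarrow> (\<forall>c. lin_comb v k c = (\<lambda>_. 0) \<longrightarrow> (\<forall>i<k. c i = 0))"

lemma lin_comb_0: "lin_comb v 0 c = 0" by (simp add: lin_comb_def fun_eq_iff)

lemma lin_comb_Suc: "lin_comb v (Suc m) c = lin_comb v m c + smul (c m) (v m)"
  by (simp add: lin_comb_def fun_eq_iff)

lemma lin_comb_add: "lin_comb v k c + lin_comb v k d = lin_comb v k (\<lambda>i. c i + d i)"
  by (simp add: lin_comb_def fun_eq_iff sum.distrib[symmetric] distrib_right)

lemma lin_comb_smul: "smul a (lin_comb v k c) = lin_comb v k (\<lambda>i. a * c i)"
  by (simp add: lin_comb_def fun_eq_iff sum_distrib_left mult.assoc)

lemma lin_comb_diff: "lin_comb v k c - lin_comb v k d = lin_comb v k (\<lambda>i. c i - d i)"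
  by (simp add: lin_comb_def fun_eq_iff sum_subtractf[symmetric] left_diff_distrib)

lemma lin_comb_zero: "lin_comb v k (\<lambda>_. 0) = 0" by (simp add: lin_comb_def fun_eq_iff)

lemma lin_comb_mem: assumes "subsp X" shows "(\<forall>i<m. v i \<in> X) \<Longrightarrow> lin_comb v m c \<in> X"
proof (induct m)
  case 0 show ?case unfolding lin_comb_0 by (rule subspD(1)[OF assms])
next
  case (Suc m)
  hence "lin_comb v m c \<in> X" "v m \<in> X" by auto
  thus ?case unfolding lin_comb_Suc using assms subspD(2,3) by blast
qed

lemma subsp_range: "subsp (range (lin_comb v k))"
  unfolding subsp_def
proof (intro conjI ballI allI)
  have "lin_comb v k (\<lambda>_. 0) \<in> range (lin_comb v k)" by (rule rangeI)
  thus "0 \<in> range (lin_comb v k)" by (simp only: lin_comb_zero)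
next
  fix x y assume "x \<in> range (lin_comb v k)" "y \<in> range (lin_comb v k)"
  then obtain c d where "x = lin_comb v k c" "y = lin_comb v k d" by blast
  moreover have "lin_comb v k (\<lambda>i. c i + d i) \<in> range (lin_comb v k)" by (rule rangeI)
  ultimately show "x + y \<in> range (lin_comb v k)" by (simp only: lin_comb_add)
next
  fix a x assume "x \<in> range (lin_comb v k)"
  then obtain c where "x = lin_comb v k c" by blast
  moreover have "lin_comb v k (\<lambda>i. a * c i) \<in> range (lin_comb v k)" by (rule rangeI)
  ultimately show "smul a x \<in> range (lin_comb v k)" by (simp only: lin_comb_smul)
qed

lemma lin_comb_restrict: "lin_comb v k (restrict c {..<k}) = lin_comb v k c"
  by (simp add: lin_comb_def fun_eq_iff)

lemma card_range:
  fixes v :: "nat \<Rightarrow> nat \<Rightarrow> 'a::{finite,field}"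
  assumes ind: "indep v k"
  shows "finite (range (lin_comb v k))" "card (range (lin_comb v k)) = card (UNIV::'a set) ^ k"
proof -
  let ?E = "PiE {..<k} (\<lambda>_. UNIV::'a set)"
  have r: "range (lin_comb v k) = lin_comb v k ` ?E"
  proof
    show "range (lin_comb v k) \<subseteq> lin_comb v k ` ?E"
    proof
      fix x assume "x \<in> range (lin_comb v k)"
      then obtain c where "x = lin_comb v k c" by blast
      hence "x = lin_comb v k (restrict c {..<k})" by (simp add: lin_comb_restrict)
      moreover have "restrict c {..<k} \<in> ?E" by simp
      ultimately show "x \<in> lin_comb v k ` ?E" by blast
    qed
  qed blast
  have inj: "inj_on (lin_comb v k) ?E"
  proof (rule inj_onI)
    fix c d assume c: "c \<in> ?E" and d: "d \<in> ?E" and e: "lin_comb v k c = lin_comb v k d"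
    have "lin_comb v k (\<lambda>i. c i - d i) = (\<lambda>_. 0)" using lin_comb_diff[of v k c d] e by (simp add: fun_eq_iff)
    hence "\<forall>i<k. c i - d i = 0" using ind unfolding indep_def by blast
    hence "\<forall>i\<in>{..<k}. c i = d i" by simp
    thus "c = d" using c d by (intro PiE_ext) auto
  qed
  have fE: "finite ?E" by (simp add: finite_PiE)
  show "finite (range (lin_comb v k))" unfolding r using fE by simp
  show "card (range (lin_comb v k)) = card (UNIV::'a set) ^ k"
    unfolding r card_image[OF inj] by (simp add: card_PiE)
qed

lemma dsub_range:
  fixes v :: "nat \<Rightarrow> nat \<Rightarrow> 'a::{finite,field}"
  shows "indep v k \<Longrightarrow> dsub (range (lin_comb v k)) k"
  using card_range[of v k] subsp_range[of v k] by (simp add: dsub_def)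

lemma range_sub:
  assumes "subsp X" "\<forall>i<k. v i \<in> X" shows "range (lin_comb v k) \<subseteq> X"
  using lin_comb_mem[OF assms(1)] assms(2) by blast

lemma greedy:
  fixes X :: "(nat \<Rightarrow> 'a::{finite,field}) set"
  assumes X: "dsub X k"
  shows "m \<le> k \<Longrightarrow> \<exists>v. (\<forall>i<m. v i \<in> X) \<and> indep v m"
proof (induct m)
  case 0 thus ?case by (simp add: indep_def)
next
  case (Suc m)
  then obtain v where v: "\<forall>i<m. v i \<in> X" "indep v m" by auto
  have sX: "subsp X" "finite X" using X by (auto simp: dsub_def)
  have sub: "range (lin_comb v m) \<subseteq> X" by (rule range_sub[OF sX(1) v(1)])
  have "card (range (lin_comb v m)) = card (UNIV::'a set) ^ m" using card_range[OF v(2)] by simp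
  moreover have "card (UNIV::'a set) ^ m < card (UNIV::'a set) ^ k"
    using Suc(2) power_strict_increasing_iff[OF q_gt1[where 'a='a]] by simp
  ultimately have "card (range (lin_comb v m)) < card X" using X by (simp add: dsub_def)
  moreover have "\<not> X \<subseteq> range (lin_comb v m)"
  proof
    assume "X \<subseteq> range (lin_comb v m)"
    hence "card X \<le> card (range (lin_comb v m))" by (rule card_mono[OF card_range(1)[OF v(2)]])
    thus False using calculation by simp
  qed
  then obtain w where w: "w \<in> X" "w \<notin> range (lin_comb v m)" by blast
  define v' where "v' = v(m := w)"
  have lc: "lin_comb v' m c = lin_comb v m c" for c by (simp add: lin_comb_def v'_def fun_eq_iff)
  have "indep v' (Suc m)" unfolding indep_def
  proof (rule allI, rule impI)
    fix c assume z: "lin_comb v' (Suc m) c = (\<lambda>_. 0)"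
    hence z2: "lin_comb v m c + smul (c m) w = 0" unfolding lin_comb_Suc lc by (simp add: v'_def zero_fun_def)
    have cm: "c m = 0"
    proof (rule ccontr)
      assume ne: "c m \<noteq> 0"
      have "w = smul (inverse (c m)) (smul (c m) w)" using smul_cancel[OF ne] by simp
      also have "smul (c m) w = - lin_comb v m c" using z2 by (simp add: eq_neg_iff_add_eq_0 add.commute)
      also have "smul (inverse (c m)) (- lin_comb v m c) = lin_comb v m (\<lambda>i. - inverse (c m) * c i)"
        by (simp add: lin_comb_def fun_eq_iff sum_distrib_left sum_negf mult.assoc)
      finally have "w = lin_comb v m (\<lambda>i. - inverse (c m) * c i)" .
      hence "w \<in> range (lin_comb v m)" by simp
      thus False using w(2) by blast
    qed
    hence "lin_comb v m c = (\<lambda>_. 0)" using z2 by (simp add: smul_def zero_fun_def)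
    hence "\<forall>i<m. c i = 0" using v(2) unfolding indep_def by blast
    thus "\<forall>i<Suc m. c i = 0" using cm less_Suc_eq by auto
  qed
  moreover have "\<forall>i<Suc m. v' i \<in> X" using v(1) w(1) by (simp add: v'_def less_Suc_eq)
  ultimately show ?case by blast
qed

lemma basis_exists:
  fixes X :: "(nat \<Rightarrow> 'a::{finite,field}) set"
  assumes X: "dsub X k"
  shows "\<exists>v. (\<forall>i<k. v i \<in> X) \<and> indep v k \<and> range (lin_comb v k) = X"
proof -
  obtain v where v: "\<forall>i<k. v i \<in> X" "indep v k" using greedy[OF X, of k] by auto
  have sub: "range (lin_comb v k) \<subseteq> X" by (rule range_sub[OF _ v(1)]) (use X in \<open>simp add: dsub_def\<close>)
  have "range (lin_comb v k) = X" using dsub_eq[OF dsub_range[OF v(2)] X sub] .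
  thus ?thesis using v by blast
qed

definition Vn :: "nat \<Rightarrow> (nat \<Rightarrow> 'a::field) set" where "Vn n = {x. \<forall>j. n < j \<longrightarrow> x j = 0}"

lemma proj_eq:
  "proj_subspaces TYPE('a::{finite,field}) n k = {X. dsub X k \<and> X \<subseteq> Vn n}"
proof (rule set_eqI)
  fix X :: "(nat \<Rightarrow> 'a) set"
  show "X \<in> proj_subspaces TYPE('a) n k \<longleftrightarrow> X \<in> {X. dsub X k \<and> X \<subseteq> Vn n}"
  proof
    assume "X \<in> proj_subspaces TYPE('a) n k"
    then obtain v where v: "\<forall>i<k. \<forall>j. n < j \<longrightarrow> v i j = 0" "indep v k" "X = range (lin_comb v k)"
      unfolding proj_subspaces_def indep_def by blast
    have "dsub X k" using dsub_range[OF v(2)] v(3) by simp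
    moreover have "X \<subseteq> Vn n" using v(1,3) by (auto simp: Vn_def lin_comb_def)
    ultimately show "X \<in> {X. dsub X k \<and> X \<subseteq> Vn n}" by simp
  next
    assume "X \<in> {X. dsub X k \<and> X \<subseteq> Vn n}"
    hence X: "dsub X k" "X \<subseteq> Vn n" by auto
    obtain v where v: "\<forall>i<k. v i \<in> X" "indep v k" "range (lin_comb v k) = X" using basis_exists[OF X(1)] by blast
    have "\<forall>i<k. \<forall>j. n < j \<longrightarrow> v i j = 0" using v(1) X(2) by (auto simp: Vn_def)
    thus "X \<in> proj_subspaces TYPE('a) n k" unfolding proj_subspaces_def using v(2,3) unfolding indep_def by blast
  qed
qed

lemma dsub_Vn: "dsub (Vn n :: (nat \<Rightarrow> 'a::{finite,field}) set) (Suc n)"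
proof -
  define e :: "nat \<Rightarrow> nat \<Rightarrow> 'a" where "e = (\<lambda>i j. if j = i then 1 else 0)"
  have lc: "lin_comb e (Suc n) c = (\<lambda>j. if j < Suc n then c j else 0)" for c
  proof
    fix j
    have "lin_comb e (Suc n) c j = (\<Sum>i<Suc n. if j = i then c i else 0)"
      unfolding lin_comb_def e_def by (rule sum.cong) auto
    also have "\<dots> = (if j < Suc n then c j else 0)" by (simp add: sum.delta)
    finally show "lin_comb e (Suc n) c j = (if j < Suc n then c j else 0)" .
  qed
  have ind: "indep e (Suc n)" unfolding indep_def
  proof (rule allI, rule impI)
    fix c assume "lin_comb e (Suc n) c = (\<lambda>_. 0)"
    hence "\<forall>j. (if j < Suc n then c j else 0) = 0" unfolding lc by meson
    thus "\<forall>i<Suc n. c i = 0" by (metis (full_types))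
  qed
  have "range (lin_comb e (Suc n)) = Vn n"
  proof
    show "range (lin_comb e (Suc n)) \<subseteq> Vn n" by (auto simp: lc Vn_def)
    show "Vn n \<subseteq> range (lin_comb e (Suc n))"
    proof
      fix x assume "x \<in> (Vn n :: (nat \<Rightarrow> 'a) set)"
      hence "lin_comb e (Suc n) x = x" unfolding lc Vn_def by (auto simp: fun_eq_iff not_less)
      moreover have "lin_comb e (Suc n) x \<in> range (lin_comb e (Suc n))" by (rule rangeI)
      ultimately show "x \<in> range (lin_comb e (Suc n))" by simp
    qed
  qed
  thus ?thesis using dsub_range[OF ind] by simp
qed

lemma plane_has_line:
  fixes P :: "(nat \<Rightarrow> 'a::{finite,field}) set"
  assumes "dsub P 3" shows "\<exists>L. dsub L 2 \<and> L \<subseteq> P"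
proof -
  obtain v where v: "\<forall>i<2. v i \<in> P" "indep v 2" using greedy[OF assms, of 2] by auto
  have "range (lin_comb v 2) \<subseteq> P" by (rule range_sub[OF _ v(1)]) (use assms in \<open>simp add: dsub_def\<close>)
  thus ?thesis using dsub_range[OF v(2)] by blast
qed


lemma blocking_char:
  "blocking_21 TYPE('a::{finite,field}) n B \<longleftrightarrow>
     (\<forall>L\<in>B. dsub L 2 \<and> L \<subseteq> Vn n) \<and> (\<forall>P. dsub P 3 \<and> P \<subseteq> Vn n \<longrightarrow> (\<exists>L\<in>B. L \<subseteq> P))"
  unfolding blocking_21_def proj_eq by blast

lemma f_bound:
  assumes n: "4 \<le> n"
  shows "real (f_21 TYPE('a::{finite,field}) n) \<ge>
     real (card (UNIV::'a set)^4 + 2*card (UNIV::'a set)^2 + card (UNIV::'a set) + 1)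
     * ((real (card (UNIV::'a set)) ^ Suc n - 1) * (real (card (UNIV::'a set)) ^ Suc n - real (card (UNIV::'a set)))
        / ((real (card (UNIV::'a set)) ^ 5 - 1) * (real (card (UNIV::'a set)) ^ 5 - real (card (UNIV::'a set)))))"
proof -
  let ?K = "{card B |B. blocking_21 TYPE('a) n B}"
  have "blocking_21 TYPE('a) n (PG_lines TYPE('a) n)"
    unfolding blocking_21_def
  proof (intro conjI ballI)
    show "PG_lines TYPE('a) n \<subseteq> PG_lines TYPE('a) n" by simp
  next
    fix P assume "P \<in> PG_planes TYPE('a) n"
    hence P: "dsub P 3" "P \<subseteq> Vn n" unfolding proj_eq by auto
    then obtain L where "dsub L 2" "L \<subseteq> P" using plane_has_line by blast
    hence "L \<in> PG_lines TYPE('a) n" unfolding proj_eq using P(2) by auto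
    thus "\<exists>L\<in>PG_lines TYPE('a) n. L \<subseteq> P" using \<open>L \<subseteq> P\<close> by blast
  qed
  hence "?K \<noteq> {}" by blast
  hence "Inf ?K \<in> ?K" by (rule Inf_nat_def1)
  then obtain B where B: "blocking_21 TYPE('a) n B" "f_21 TYPE('a) n = card B"
    unfolding f_21_def by auto
  have B': "\<forall>L\<in>B. dsub L 2 \<and> L \<subseteq> Vn n" "\<forall>P. dsub P 3 \<and> P \<subseteq> Vn n \<longrightarrow> (\<exists>L\<in>B. L \<subseteq> P)"
    using B(1) unfolding blocking_char by auto
  have "5 \<le> Suc n" using n by simp
  from avg_bound[OF dsub_Vn this, of B] B' B(2) show ?thesis by simp
qed

lemma alg1:
  fixes a b d e f x :: real
  assumes "x \<noteq> 0"
  shows "a * ((b * (x * d)) / (e * (x * f))) = b * d * a / (e * f)"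
  using assms by (simp add: field_simps)

lemma part1_eq:
  fixes x :: real and c :: real
  assumes x: "x > 1"
  shows "c * ((x ^ Suc n - 1) * (x ^ Suc n - x) / ((x ^ 5 - 1) * (x ^ 5 - x)))
       = (x ^ (n + 1) - 1) * (x ^ n - 1) * c / ((x ^ 5 - 1) * (x ^ 4 - 1))"
proof -
  have e1: "x ^ Suc n - x = x * (x ^ n - 1)" by (simp add: algebra_simps)
  have e2: "x ^ 5 - x = x * (x ^ 4 - 1)" by (simp add: algebra_simps numeral_eq_Suc)
  show ?thesis unfolding e1 e2 using alg1[of x c "x ^ Suc n - 1" "x ^ n - 1" "x ^ 5 - 1" "x ^ 4 - 1"] x by simp
qed

lemma part2_ineq:
  fixes x :: real
  assumes x: "x \<ge> 2" and n: "n \<ge> 5"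
  shows "(x ^ (n + 1) - 1) * (x ^ n - 1) * (x ^ 4 + 2 * x ^ 2 + x + 1) / ((x ^ 5 - 1) * (x ^ 4 - 1))
       \<ge> x ^ (2*n - 4) + 2 * x ^ (2*n - 6) + x ^ (2*n - 7) + 2 * x ^ (2*n - 8)"
proof -
  obtain m where m: "n = m + 5" using n by (metis add.commute le_iff_add)
  define Q where "Q = x ^ m"
  have x1: "x \<ge> 1" using x by simp
  have Q1: "Q \<ge> 1" unfolding Q_def using x1 by (simp add: one_le_power)
  have p1: "x ^ (n + 1) = x^6 * Q" "x ^ n = x^5 * Q" unfolding m Q_def by (simp_all add: power_add)
  have p2: "x ^ (2*n - 4) = x^6 * Q^2" "x ^ (2*n - 6) = x^4 * Q^2" "x ^ (2*n - 7) = x^3 * Q^2"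
    "x ^ (2*n - 8) = x^2 * Q^2"
  proof -
    have e: "2*n - 4 = m*2 + 6" "2*n - 6 = m*2 + 4" "2*n - 7 = m*2 + 3" "2*n - 8 = m*2 + 2" using m by simp_all
    show "x ^ (2*n - 4) = x^6 * Q^2" "x ^ (2*n - 6) = x^4 * Q^2" "x ^ (2*n - 7) = x^3 * Q^2"
      "x ^ (2*n - 8) = x^2 * Q^2" unfolding e Q_def by (simp_all only: power_add power_mult mult.commute)
  qed
  define D2 where "D2 = x^10 + 2*x^9 + 3*x^8 + 3*x^7 + x^6 - 2*x^4 - x^3 - 2*x^2"
  define D1 where "D1 = (x^6 + x^5) * (x^4 + 2*x^2 + x + 1)"
  define D0 where "D0 = x^4 + 2*x^2 + x + 1"
  have id: "(x^6 * Q - 1) * (x^5 * Q - 1) * (x^4 + 2*x^2 + x + 1)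
      - (x^6 * Q^2 + 2 * (x^4 * Q^2) + x^3 * Q^2 + 2 * (x^2 * Q^2)) * ((x^5 - 1) * (x^4 - 1))
      = D2 * Q^2 - D1 * Q + D0"
    unfolding D2_def D1_def D0_def by algebra
  have m1: "x^2 \<le> x^3" "x^3 \<le> x^4" "x^4 \<le> x^5" "x^5 \<le> x^6" using x1 by (simp_all add: power_increasing)
  have e9: "x^9 = x^3 * x^6" by (simp add: power_add[symmetric])
  have "x^3 \<ge> 8" using power_mono[OF x, of 3] by simp
  moreover have "x^6 \<ge> 0" using x by simp
  ultimately have "8 * x^6 \<le> x^3 * x^6" by (rule mult_right_mono)
  hence x9: "x^9 \<ge> 8 * x^6" unfolding e9 .
  have x8: "x^8 \<ge> 0" using x by simp
  have x6: "x^6 \<ge> 0" using x by simp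
  have "D2 - D1 = x^9 + x^8 - x^6 - x^5 - 2*x^4 - x^3 - 2*x^2" unfolding D2_def D1_def by algebra
  hence d21: "D2 - D1 \<ge> 0" using x9 x8 x6 m1 by linarith
  have D1p: "D1 \<ge> 0" unfolding D1_def using x by simp
  have D0p: "D0 \<ge> 0" unfolding D0_def using x by simp
  have QQ: "Q^2 - Q \<ge> 0" using Q1 by (simp add: power2_eq_square)
  have "D2 * Q^2 - D1 * Q + D0 = (D2 - D1) * Q^2 + D1 * (Q^2 - Q) + D0" by algebra
  moreover have "(D2 - D1) * Q^2 \<ge> 0" using d21 by simp
  moreover have "D1 * (Q^2 - Q) \<ge> 0" using D1p QQ by simp
  ultimately have "D2 * Q^2 - D1 * Q + D0 \<ge> 0" using D0p by linarith
  hence key: "(x^6 * Q^2 + 2 * (x^4 * Q^2) + x^3 * Q^2 + 2 * (x^2 * Q^2)) * ((x^5 - 1) * (x^4 - 1))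
      \<le> (x^6 * Q - 1) * (x^5 * Q - 1) * (x^4 + 2*x^2 + x + 1)" using id by linarith
  have "x^5 > 1" "x^4 > 1" using x by (simp_all add: one_less_power)
  hence dpos: "(x^5 - 1) * (x^4 - 1) > 0" by simp
  show ?thesis unfolding p1 p2 using key dpos by (simp add: pos_le_divide_eq)
qed


theorem proposition1p8:
  fixes n :: nat
  assumes "n \<ge> 4"
  defines "q \<equiv> real (card (UNIV :: 'a set))"
  shows "real (f_21 TYPE('a::{finite,field}) n) \<ge>
           (q ^ (n + 1) - 1) * (q ^ n - 1) * (q ^ 4 + 2 * q ^ 2 + q + 1) / ((q ^ 5 - 1) * (q ^ 4 - 1))
       \<and> (n \<ge> 5 \<longrightarrow>
           real (f_21 TYPE('a) n) \<ge> q ^ (2*n - 4) + 2 * q ^ (2*n - 6) + q ^ (2*n - 7) + 2 * q ^ (2*n - 8))"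
proof -
  have q2: "q \<ge> 2" unfolding q_def using card_ge2[where 'a='a] by simp
  hence q1: "q > 1" by simp
  have "real (f_21 TYPE('a) n) \<ge>
     real (card (UNIV::'a set)^4 + 2*card (UNIV::'a set)^2 + card (UNIV::'a set) + 1)
     * ((real (card (UNIV::'a set)) ^ Suc n - 1) * (real (card (UNIV::'a set)) ^ Suc n - real (card (UNIV::'a set)))
        / ((real (card (UNIV::'a set)) ^ 5 - 1) * (real (card (UNIV::'a set)) ^ 5 - real (card (UNIV::'a set)))))"
    by (rule f_bound[OF assms(1)])
  moreover have rc: "real (card (UNIV::'a set)^4 + 2*card (UNIV::'a set)^2 + card (UNIV::'a set) + 1) = q ^ 4 + 2 * q ^ 2 + q + 1"
    unfolding q_def by simp
  moreover have rq: "real (card (UNIV::'a set)) = q" unfolding q_def by simp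
  ultimately have "real (f_21 TYPE('a) n) \<ge> (q ^ 4 + 2 * q ^ 2 + q + 1) * ((q ^ Suc n - 1) * (q ^ Suc n - q) / ((q ^ 5 - 1) * (q ^ 5 - q)))"
    by (simp only: rc rq)
  hence P1: "real (f_21 TYPE('a) n) \<ge>
           (q ^ (n + 1) - 1) * (q ^ n - 1) * (q ^ 4 + 2 * q ^ 2 + q + 1) / ((q ^ 5 - 1) * (q ^ 4 - 1))"
    unfolding part1_eq[OF q1] .
  moreover have "n \<ge> 5 \<longrightarrow>
           real (f_21 TYPE('a) n) \<ge> q ^ (2*n - 4) + 2 * q ^ (2*n - 6) + q ^ (2*n - 7) + 2 * q ^ (2*n - 8)"
  proof
    assume "n \<ge> 5"
    from part2_ineq[OF q2 this] P1 show "real (f_21 TYPE('a) n) \<ge> q ^ (2*n - 4) + 2 * q ^ (2*n - 6) + q ^ (2*n - 7) + 2 * q ^ (2*n - 8)"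
      by (rule order.trans)
  qed
  ultimately show ?thesis by blast
qed

end
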